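(* Let $k\ge1$ and assume that $R_0,\dots,R_k$ (from BCG) have full column rank. Then $$[T_{k+1}^{-1}]_{1,1}-[T_k^{-1}]_{1,1}=\Phi_0^{-T}\Phi_k^T\Delta_{k+1}^{-1}\Phi_k\Phi_0^{-1},$$ and consequently $$\Phi_0^T\Big([T_{k+1}^{-1}]_{1,1}-[T_k^{-1}]_{1,1}\Big)\Phi_0=(R_k^TR_k)\Upsilon_k=\Theta_k .$$
   Context: Let $A\in\mathbb{R}^{n\times n}$ be symmetric positive definite, let $B,X_0\in\mathbb{R}^{n\times m}$, and let $X=A^{-1}B$. The block conjugate gradient (BCG) algorithm sets $R_0=B-AX_0$, $P_0=R_0$, and for $k=1,2,\dots$: $\Upsilon_{k-1}=(P_{k-1}^TAP_{k-1})^{-1}(R_{k-1}^TR_{k-1})$, $X_k=X_{k-1}+P_{k-1}\Upsilon_{k-1}$, $R_k=R_{k-1}-AP_{k-1}\Upsilon_{k-1}$, $\Xi_k=(R_{k-1}^TR_{k-1})^{-1}(R_k^TR_k)$, $P_k=R_k+P_{k-1}\Xi_k$. Define $\mathfrak{E}_k=(X-X_k)^TA(X-X_k)$ and $\Theta_k=(R_k^TR_k)\Upsilon_k$. The block Lanczos algorithm below is started from the same $R_0=B-AX_0$. Let $A\in\mathbb{R}^{n\times n}$ be symmetric positive definite and $R_0\in\mathbb{R}^{n\times m}$ of full column rank. The block Lanczos algorithm started from $R_0$ is: $V_0=0$; $V_1\Gamma_0=R_0$ is a QR factorization ($V_1\in\mathbb{R}^{n\times m}$ with orthonormal columns, $\Gamma_0\in\mathbb{R}^{m\times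 m}$ upper triangular); for $k=1,2,\dots$: $W=AV_k-V_{k-1}\Gamma_{k-1}^T$, $\Omega_k=V_k^TW$, and $V_{k+1}\Gamma_k=W-V_k\Omega_k$ is a QR factorization. It is assumed that for all indices considered the block Krylov subspace $\mathrm{colspan}\{R_0,AR_0,\dots,A^{j-1}R_0\}$ has dimension $jm$, so that every $\Gamma_j$ is nonsingular and $V_i^TV_j=\delta_{ij}I_m$. Put $\mathcal V_k=(V_1,\dots,V_k)\in\mathbb{R}^{n\times km}$ and let $T_k\in\mathbb{R}^{km\times km}$ be the symmetric block tridiagonal matrix with diagonal blocks $\Omega_1,\dots,\Omega_k$, subdiagonal blocks $\Gamma_1,\dots,\Gamma_{k-1}$ and superdiagonal blocks $\Gamma_1^T,\dots,\Gamma_{k-1}^T$; one has $A\mathcal V_k=\mathcal V_kT_k+V_{k+1}\Gamma_kE_k^T$ and $T_k=\mathcal V_k^TA\mathcal V_k$ is symmetric positive definite. Define $\Delta_1=\Omega_1$, $\Delta_j=\Omega_j-\Gamma_{j-1}\Delta_{j-1}^{-1}\Gamma_{j-1}^T$ ($j\ge2$) (the diagonal blocks of the block $LDL^T$-type factorization of $T_k$; they are symmetric positive definite), $\Pi_j=\Gamma_j\Delta_j^{-1}$, $\Phi_0=\Gamma_0$ and $\Phi_j=\Pi_j\Phi_{j-1}$. Let $E_j=e_j\otimes I_m\in\mathbb{R}^{km\times m}$; for $M\in\mathbb{R}^{km\times km}$, $[M]_{i,j}$ denotes its $(i,j)$ block of size $m\times m$, and for $Y\in\mathbb{R}^{km\times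 m}$, $[Y]_j$ denotes its $j$th $m\times m$ block. *)

theory Defs
  imports "Jordan_Normal_Form.Gauss_Jordan_Elimination" "Jordan_Normal_Form.DL_Rank"
begin

definition minv :: "real mat \<Rightarrow> real mat" where
  "minv M = the (mat_inverse M)"

definition spd :: "nat \<Rightarrow> real mat \<Rightarrow> bool" where
  "spd n A \<longleftrightarrow> A \<in> carrier_mat n n \<and> transpose_mat A = A \<and>
     (\<forall>v \<in> carrier_vec n. v \<noteq> 0\<^sub>v n \<longrightarrow> v \<bullet> (A *\<^sub>v v) > 0)"

definition full_col_rank :: "real mat \<Rightarrow> bool" where
  "full_col_rank M \<longleftrightarrow> vec_space.rank (dim_row M) M = dim_col M"

text \<open>Block Krylov matrix (R0, A R0, ..., A^(j-1) R0), of size n x (j m).\<close>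
definition krylov_mat :: "nat \<Rightarrow> real mat \<Rightarrow> real mat \<Rightarrow> nat \<Rightarrow> real mat" where
  "krylov_mat m A R0 j = mat (dim_row R0) (j * m)
     (\<lambda>(r, c). ((A ^\<^sub>m (c div m)) * R0) $$ (r, c mod m))"

fun bcg :: "real mat \<Rightarrow> real mat \<Rightarrow> real mat \<Rightarrow> nat \<Rightarrow> real mat \<times> real mat \<times> real mat" where
  "bcg A B X0 0 = (X0, B - A * X0, B - A * X0)"
| "bcg A B X0 (Suc k) =
     (case bcg A B X0 k of (X, R, P) \<Rightarrow>
        let Ups = minv (transpose_mat P * A * P) * (transpose_mat R * R);
            X' = X + P * Ups;
            R' = R - A * P * Ups;
            Xi = minv (transpose_mat R * R) * (transpose_mat R' * R');
            P' = R' + P * Xi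
        in (X', R', P'))"

definition bcg_R :: "real mat \<Rightarrow> real mat \<Rightarrow> real mat \<Rightarrow> nat \<Rightarrow> real mat" where
  "bcg_R A B X0 k = fst (snd (bcg A B X0 k))"

definition bcg_P :: "real mat \<Rightarrow> real mat \<Rightarrow> real mat \<Rightarrow> nat \<Rightarrow> real mat" where
  "bcg_P A B X0 k = snd (snd (bcg A B X0 k))"

definition bcg_Upsilon :: "real mat \<Rightarrow> real mat \<Rightarrow> real mat \<Rightarrow> nat \<Rightarrow> real mat" where
  "bcg_Upsilon A B X0 k =
     minv (transpose_mat (bcg_P A B X0 k) * A * bcg_P A B X0 k)
       * (transpose_mat (bcg_R A B X0 k) * bcg_R A B X0 k)"

definition bcg_Theta :: "real mat \<Rightarrow> real mat \<Rightarrow> real mat \<Rightarrow> nat \<Rightarrow> real mat" where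
  "bcg_Theta A B X0 k =
     (transpose_mat (bcg_R A B X0 k) * bcg_R A B X0 k) * bcg_Upsilon A B X0 k"

text \<open>V, G (= Gamma), Om (= Omega) are generated by the block Lanczos algorithm started
  from R0, where the QR factorizations are arbitrary (orthonormal columns times an upper
  triangular factor).\<close>
definition block_lanczos ::
  "nat \<Rightarrow> nat \<Rightarrow> real mat \<Rightarrow> real mat \<Rightarrow> (nat \<Rightarrow> real mat) \<Rightarrow> (nat \<Rightarrow> real mat)
     \<Rightarrow> (nat \<Rightarrow> real mat) \<Rightarrow> nat \<Rightarrow> bool" where
  "block_lanczos n m A R0 V G Om K \<longleftrightarrow>
     V 0 = 0\<^sub>m n m \<and>
     V 1 \<in> carrier_mat n m \<and> G 0 \<in> carrier_mat m m \<and> upper_triangular (G 0) \<and>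
     transpose_mat (V 1) * V 1 = 1\<^sub>m m \<and> V 1 * G 0 = R0 \<and>
     (\<forall>j. 1 \<le> j \<and> j \<le> K \<longrightarrow>
        Om j = transpose_mat (V j) * (A * V j - V (j - 1) * transpose_mat (G (j - 1)))) \<and>
     (\<forall>j. 1 \<le> j \<and> j < K \<longrightarrow>
        V (Suc j) \<in> carrier_mat n m \<and> G j \<in> carrier_mat m m \<and> upper_triangular (G j) \<and>
        transpose_mat (V (Suc j)) * V (Suc j) = 1\<^sub>m m \<and>
        V (Suc j) * G j = (A * V j - V (j - 1) * transpose_mat (G (j - 1))) - V j * Om j)"

text \<open>T_k: symmetric block tridiagonal (k m) x (k m) matrix, diagonal blocks Omega_1..Omega_k,
  subdiagonal blocks Gamma_1..Gamma_(k-1), superdiagonal blocks their transposes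
  (block indices are 1-based, as in the paper).\<close>
definition lanczos_T :: "nat \<Rightarrow> (nat \<Rightarrow> real mat) \<Rightarrow> (nat \<Rightarrow> real mat) \<Rightarrow> nat \<Rightarrow> real mat" where
  "lanczos_T m Om G k = mat (k * m) (k * m) (\<lambda>(r, c).
     let i = r div m + 1; j = c div m + 1; a = r mod m; b = c mod m in
     if i = j then Om i $$ (a, b)
     else if i = j + 1 then G j $$ (a, b)
     else if j = i + 1 then G i $$ (b, a)
     else 0)"

definition block11 :: "nat \<Rightarrow> real mat \<Rightarrow> real mat" where
  "block11 m M = mat m m (\<lambda>(a, b). M $$ (a, b))"

fun lanczos_Delta :: "(nat \<Rightarrow> real mat) \<Rightarrow> (nat \<Rightarrow> real mat) \<Rightarrow> nat \<Rightarrow> real mat" where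
  "lanczos_Delta Om G 0 = undefined"
| "lanczos_Delta Om G (Suc 0) = Om 1"
| "lanczos_Delta Om G (Suc (Suc j)) =
     Om (Suc (Suc j)) - G (Suc j) * minv (lanczos_Delta Om G (Suc j)) * transpose_mat (G (Suc j))"

definition lanczos_Pi :: "(nat \<Rightarrow> real mat) \<Rightarrow> (nat \<Rightarrow> real mat) \<Rightarrow> nat \<Rightarrow> real mat" where
  "lanczos_Pi Om G j = G j * minv (lanczos_Delta Om G j)"

fun lanczos_Phi :: "(nat \<Rightarrow> real mat) \<Rightarrow> (nat \<Rightarrow> real mat) \<Rightarrow> nat \<Rightarrow> real mat" where
  "lanczos_Phi Om G 0 = G 0"
| "lanczos_Phi Om G (Suc j) = lanczos_Pi Om G (Suc j) * lanczos_Phi Om G j"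

end

theory Submission imports Defs begin

lemma massoc: "dim_col (A::real mat) = dim_row B \<Longrightarrow> dim_col B = dim_row C \<Longrightarrow> A * B * C = A * (B * C)"
  by (rule assoc_mult_mat[of A "dim_row A" "dim_col A" B "dim_col B" C "dim_col C"]) auto

lemma mdistl: "dim_col (A::real mat) = dim_row B \<Longrightarrow> dim_row B = dim_row C \<Longrightarrow> dim_col B = dim_col C
   \<Longrightarrow> A * (B + C) = A * B + A * C"
  by (rule mult_add_distrib_mat[of A "dim_row A" "dim_col A"]) auto

lemma mdistr: "dim_col (A::real mat) = dim_row C \<Longrightarrow> dim_row A = dim_row B \<Longrightarrow> dim_col A = dim_col B
   \<Longrightarrow> (A + B) * C = A * C + B * C"
  by (rule add_mult_distrib_mat[of A "dim_row A" "dim_col A"]) auto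

lemma mdistl_minus: "dim_col (A::real mat) = dim_row B \<Longrightarrow> dim_row B = dim_row C \<Longrightarrow> dim_col B = dim_col C
   \<Longrightarrow> A * (B - C) = A * B - A * C"
  by (rule mult_minus_distrib_mat[of A "dim_row A" "dim_col A"]) auto

lemma mdistr_minus: "dim_col (A::real mat) = dim_row C \<Longrightarrow> dim_row A = dim_row B \<Longrightarrow> dim_col A = dim_col B
   \<Longrightarrow> (A - B) * C = A * C - B * C"
  by (rule minus_mult_distrib_mat[of A "dim_row A" "dim_col A"]) auto

lemma mtrans_mult: "dim_col (A::real mat) = dim_row B \<Longrightarrow> transpose_mat (A * B) = transpose_mat B * transpose_mat A"
  by (rule transpose_mult[of A "dim_row A" "dim_col A"]) auto

lemma mtrans_add: "dim_row (A::real mat) = dim_row B \<Longrightarrow> dim_col A = dim_col B \<Longrightarrow>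
   transpose_mat (A + B) = transpose_mat A + transpose_mat B"
  by (rule transpose_add[of A "dim_row A" "dim_col A"]) auto

lemma mtrans_minus: "dim_row (A::real mat) = dim_row B \<Longrightarrow> dim_col A = dim_col B \<Longrightarrow>
   transpose_mat (A - B) = transpose_mat A - transpose_mat B"
  by (rule transpose_minus[of A "dim_row A" "dim_col A"]) auto

lemma msmult_left: "dim_col (A::real mat) = dim_row B \<Longrightarrow> (c \<cdot>\<^sub>m A) * B = c \<cdot>\<^sub>m (A * B)"
  by (rule mult_smult_assoc_mat[of A "dim_row A" "dim_col A" B "dim_col B"]) auto

lemma msmult_right: "dim_col (A::real mat) = dim_row B \<Longrightarrow> A * (c \<cdot>\<^sub>m B) = c \<cdot>\<^sub>m (A * B)"
  by (rule mult_smult_distrib[of A "dim_row A" "dim_col A" B "dim_col B"]) auto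

lemma msmult_trans: "transpose_mat (c \<cdot>\<^sub>m (A::real mat)) = c \<cdot>\<^sub>m transpose_mat A"
  by (intro eq_matI) auto

lemma msmult_smult: "c \<cdot>\<^sub>m (d \<cdot>\<^sub>m (A::real mat)) = (c * d) \<cdot>\<^sub>m A"
  by (intro eq_matI) auto

lemma msmult_one: "1 \<cdot>\<^sub>m (A::real mat) = A"
  by (intro eq_matI) auto

lemma mminus_smult: "dim_row (A::real mat) = dim_row B \<Longrightarrow> dim_col A = dim_col B \<Longrightarrow>
  c \<cdot>\<^sub>m A - c \<cdot>\<^sub>m B = c \<cdot>\<^sub>m (A - B)"
  by (intro eq_matI) (auto simp: algebra_simps)

lemma madd_smult: "dim_row (A::real mat) = dim_row B \<Longrightarrow> dim_col A = dim_col B \<Longrightarrow> c \<cdot>\<^sub>m A + c \<cdot>\<^sub>m B = c \<cdot>\<^sub>m (A + B)"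
  by (intro eq_matI) (auto simp: algebra_simps)

lemma mcancel: "(A::real mat) * B = 1\<^sub>m k \<Longrightarrow> dim_col A = dim_row B \<Longrightarrow> dim_col B = dim_row C \<Longrightarrow> dim_row C = k
  \<Longrightarrow> A * (B * C) = C"
  by (subst massoc[symmetric]) auto

lemma rassoc: "(P::real mat) * Q = R \<Longrightarrow> dim_col P = dim_row Q \<Longrightarrow> dim_col Q = dim_row X \<Longrightarrow> P * (Q * X) = R * X"
  by (subst massoc[symmetric]) auto

lemma madd0r: "dim_row (X::real mat) = r \<Longrightarrow> dim_col X = c \<Longrightarrow> X + 0\<^sub>m r c = X"
  by (intro eq_matI) auto
lemma madd0l: "dim_row (X::real mat) = r \<Longrightarrow> dim_col X = c \<Longrightarrow> 0\<^sub>m r c + X = X"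
  by (intro eq_matI) auto
lemma mminus0r: "dim_row (X::real mat) = r \<Longrightarrow> dim_col X = c \<Longrightarrow> X - 0\<^sub>m r c = X"
  by (intro eq_matI) auto
lemma mminus_self: "(X::real mat) - X = 0\<^sub>m (dim_row X) (dim_col X)"
  by (intro eq_matI) auto

lemma rassoc2: "(P::real mat) * (Q * R) = S \<Longrightarrow> dim_col P = dim_row Q \<Longrightarrow> dim_col Q = dim_row R
  \<Longrightarrow> dim_col R = dim_row X \<Longrightarrow> P * (Q * (R * X)) = S * X"
  by (subst massoc[symmetric], simp, simp)+ (simp add: massoc)

lemma smult_cancel1: "dim_row (X::real mat) = dim_row Y \<Longrightarrow> dim_col X = dim_col Y \<Longrightarrow>
  c \<cdot>\<^sub>m X - c \<cdot>\<^sub>m (X + Y) = (- c) \<cdot>\<^sub>m Y"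
  by (intro eq_matI) (auto simp: algebra_simps)

lemma smult_cancel2: "dim_row (X::real mat) = dim_row Y \<Longrightarrow> dim_col X = dim_col Y \<Longrightarrow>
  (- c) \<cdot>\<^sub>m X + c \<cdot>\<^sub>m Y = (- c) \<cdot>\<^sub>m (X - Y)"
  by (intro eq_matI) (auto simp: algebra_simps)

lemmas malg = massoc mdistl mdistr mdistl_minus mdistr_minus mtrans_mult mtrans_add mtrans_minus
  madd0r madd0l mminus0r msmult_left msmult_right msmult_trans

definition invm :: "real mat \<Rightarrow> nat \<Rightarrow> bool" where
  "invm M n \<longleftrightarrow> M \<in> carrier_mat n n \<and> minv M \<in> carrier_mat n n \<and> M * minv M = 1\<^sub>m n \<and> minv M * M = 1\<^sub>m n"

definition inj_m :: "real mat \<Rightarrow> bool" where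
  "inj_m M \<longleftrightarrow> (\<forall>v \<in> carrier_vec (dim_col M). M *\<^sub>v v = 0\<^sub>v (dim_row M) \<longrightarrow> v = 0\<^sub>v (dim_col M))"

lemma unit_minv: assumes M: "(M::real mat) \<in> carrier_mat n n" and U: "M \<in> Units (ring_mat TYPE(real) n ())"
  shows "invm M n"
proof -
  obtain B where B: "mat_inverse M = Some B"
    using mat_inverse(1)[OF M, of "()"] U by (cases "mat_inverse M") auto
  from mat_inverse(2)[OF M B] show ?thesis unfolding invm_def minv_def B using M by auto
qed

lemma inj_invm: assumes M: "(M::real mat) \<in> carrier_mat n n" and I: "inj_m M" shows "invm M n"
proof -
  have "det M \<noteq> 0"
    using det_0_iff_vec_prod_zero_field[OF M] I M unfolding inj_m_def by auto
  from det_non_zero_imp_unit[OF M this, of "()"] show ?thesis using unit_minv[OF M] by auto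
qed

lemma minv_unique: assumes M: "(M::real mat) \<in> carrier_mat n n" and N: "N \<in> carrier_mat n n"
  and MN: "M * N = 1\<^sub>m n"
  shows "invm M n" "minv M = N"
proof -
  have "det M * det N = 1" using arg_cong[OF MN, of det] det_mult[OF M N] by simp
  hence "det M \<noteq> 0" by auto
  from det_non_zero_imp_unit[OF M this, of "()"] have I: "invm M n" using unit_minv[OF M] by auto
  thus "invm M n" .
  have "minv M = minv M * (M * N)" unfolding MN using I unfolding invm_def by auto
  also have "\<dots> = (minv M * M) * N" using I M N unfolding invm_def by (intro assoc_mult_mat[symmetric, of _ n n _ n _ n]) auto
  also have "\<dots> = N" using I N unfolding invm_def by auto
  finally show "minv M = N" .
qed

lemma invm_carrier: "invm M n \<Longrightarrow> M \<in> carrier_mat n n" "invm M n \<Longrightarrow> minv M \<in> carrier_mat n n"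
  "invm M n \<Longrightarrow> dim_row M = n" "invm M n \<Longrightarrow> dim_col M = n"
  "invm M n \<Longrightarrow> dim_row (minv M) = n" "invm M n \<Longrightarrow> dim_col (minv M) = n"
  "invm M n \<Longrightarrow> M * minv M = 1\<^sub>m n" "invm M n \<Longrightarrow> minv M * M = 1\<^sub>m n"
  unfolding invm_def by auto

lemma invm_minv: assumes "invm M n" shows "invm (minv M) n" "minv (minv M) = M"
  using minv_unique[of "minv M" n M] assms unfolding invm_def by auto

lemma invm_mult: assumes A: "invm A n" and B: "invm B n"
  shows "invm (A * B) n" "minv (A * B) = minv B * minv A"
proof -
  note c = invm_carrier[OF A] invm_carrier[OF B]
  have "A * B * (minv B * minv A) = A * (B * (minv B * minv A))"
    using c by (intro massoc) auto
  also have "B * (minv B * minv A) = minv A" using c by (intro mcancel) auto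
  finally have e: "A * B * (minv B * minv A) = 1\<^sub>m n" using c by simp
  show "invm (A * B) n" "minv (A * B) = minv B * minv A"
    using minv_unique[OF _ _ e] c by auto
qed

lemma invm_trans: assumes A: "invm A n"
  shows "invm (transpose_mat A) n" "minv (transpose_mat A) = transpose_mat (minv A)"
proof -
  note c = invm_carrier[OF A]
  have e: "transpose_mat A * transpose_mat (minv A) = 1\<^sub>m n"
    using c mtrans_mult[of "minv A" A, symmetric] by simp
  show "invm (transpose_mat A) n" "minv (transpose_mat A) = transpose_mat (minv A)"
    using minv_unique[OF _ _ e] c by auto
qed

lemma invm_sym: assumes A: "invm A n" and S: "transpose_mat A = A"
  shows "transpose_mat (minv A) = minv A"
  using invm_trans[OF A] S by simp

lemma left_inv_inj: assumes "(L::real mat) * M = 1\<^sub>m (dim_col M)" "dim_col L = dim_row M" shows "inj_m M"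
  unfolding inj_m_def
proof (intro ballI impI)
  fix v assume v: "v \<in> carrier_vec (dim_col M)" and Mv: "M *\<^sub>v v = 0\<^sub>v (dim_row M)"
  have "v = (L * M) *\<^sub>v v" unfolding assms(1) using v by simp
  also have "\<dots> = L *\<^sub>v (M *\<^sub>v v)" using assms v
    by (intro assoc_mult_mat_vec[of L "dim_row L" "dim_col L" M "dim_col M"]) auto
  also have "\<dots> = 0\<^sub>v (dim_col M)" unfolding Mv
  proof -
    have d: "dim_row L = dim_col M" using arg_cong[OF assms(1), of dim_row] by simp
    show "L *\<^sub>v 0\<^sub>v (dim_row M) = 0\<^sub>v (dim_col M)"
      by (rule eq_vecI) (auto simp: d assms(2) scalar_prod_def)
  qed
  finally show "v = 0\<^sub>v (dim_col M)" .
qed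


lemma (in vec_space) rank_le_card_cols:
  assumes "A \<in> carrier_mat n nc" shows "rank A \<le> card (set (cols A))"
proof -
  obtain S where S: "maximal S (\<lambda>T. T \<subseteq> set (cols A) \<and> lin_indpt T)"
    using maximal_exists[of "(\<lambda>T. T \<subseteq> set (cols A) \<and> lin_indpt T)" "card (set (cols A))" "{}"]
    by (meson List.finite_set card_mono empty_iff empty_subsetI finite_lin_indpt2 rev_finite_subset)
  then have "card S \<le> card (set (cols A))" by (simp add: card_mono maximal_def)
  then show ?thesis using rank_card_indpt[OF assms S] by simp
qed

lemma fcr_inj: assumes F: "full_col_rank (R::real mat)" shows "inj_m R"
proof -
  interpret vec_space "TYPE(real)" "dim_row R" .
  have Rc: "R \<in> carrier_mat (dim_row R) (dim_col R)" by auto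
  have rk: "rank R = dim_col R" using F unfolding full_col_rank_def by simp
  have dist: "distinct (cols R)"
  proof (rule ccontr)
    assume "\<not> distinct (cols R)"
    hence "card (set (cols R)) < length (cols R)"
      using card_distinct card_length le_neq_implies_less by blast
    hence "card (set (cols R)) < dim_col R" by simp
    with rank_le_card_cols[OF Rc] rk show False by simp
  qed
  have li: "lin_indpt (set (cols R))" using full_rank_lin_indpt[OF Rc rk dist] .
  show ?thesis unfolding inj_m_def
  proof (intro ballI impI)
    fix v assume v: "v \<in> carrier_vec (dim_col R)" and Rv: "R *\<^sub>v v = 0\<^sub>v (dim_row R)"
    show "v = 0\<^sub>v (dim_col R)"
    proof (rule ccontr)
      assume "v \<noteq> 0\<^sub>v (dim_col R)"
      from lin_depI[OF Rc v this Rv dist] li show False by simp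
    qed
  qed
qed

lemma inj_mult: assumes A: "inj_m (A::real mat)" and B: "inj_m B" and d: "dim_col A = dim_row B"
  shows "inj_m (A * B)"
  unfolding inj_m_def
proof (intro ballI impI)
  fix v assume v: "v \<in> carrier_vec (dim_col (A * B))" and e: "A * B *\<^sub>v v = 0\<^sub>v (dim_row (A * B))"
  have vc: "v \<in> carrier_vec (dim_col B)" using v by simp
  have Ac: "A \<in> carrier_mat (dim_row A) (dim_row B)" by (rule carrier_matI) (use d in auto)
  have Bc: "B \<in> carrier_mat (dim_row B) (dim_col B)" by (rule carrier_matI) auto
  have "A * B *\<^sub>v v = A *\<^sub>v (B *\<^sub>v v)"
    using assoc_mult_mat_vec[OF Ac Bc vc] .
  hence e1: "A *\<^sub>v (B *\<^sub>v v) = 0\<^sub>v (dim_row A)" using e by simp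
  have bc: "B *\<^sub>v v \<in> carrier_vec (dim_col A)" using d by (intro carrier_vecI) auto
  have "B *\<^sub>v v = 0\<^sub>v (dim_col A)" using A bc e1 unfolding inj_m_def by blast
  hence "B *\<^sub>v v = 0\<^sub>v (dim_row B)" using d by simp
  thus "v = 0\<^sub>v (dim_col (A * B))" using B vc unfolding inj_m_def by simp
qed

lemma inj_mult_right: assumes AB: "inj_m ((A::real mat) * B)" and d: "dim_col A = dim_row B"
  shows "inj_m B"
  unfolding inj_m_def
proof (intro ballI impI)
  fix v assume v: "v \<in> carrier_vec (dim_col B)" and e: "B *\<^sub>v v = 0\<^sub>v (dim_row B)"
  have Ac: "A \<in> carrier_mat (dim_row A) (dim_row B)" by (rule carrier_matI) (use d in auto)
  have Bc: "B \<in> carrier_mat (dim_row B) (dim_col B)" by (rule carrier_matI) auto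
  have "A * B *\<^sub>v v = A *\<^sub>v (B *\<^sub>v v)"
    using assoc_mult_mat_vec[OF Ac Bc v] .
  also have "\<dots> = 0\<^sub>v (dim_row A)" unfolding e
    by (rule eq_vecI) (auto simp: d scalar_prod_def)
  finally show "v = 0\<^sub>v (dim_col B)" using AB v unfolding inj_m_def by auto
qed

lemma invm_inj: assumes "invm M n" shows "inj_m M"
proof -
  note c = invm_carrier[OF assms]
  show ?thesis by (rule left_inv_inj[of "minv M"]) (simp_all add: c)
qed

lemma inj_smult: "inj_m (c \<cdot>\<^sub>m M) \<Longrightarrow> c \<noteq> 0 \<Longrightarrow> inj_m (M::real mat)"
  unfolding inj_m_def
proof (intro ballI impI)
  fix v assume I: "\<forall>v\<in>carrier_vec (dim_col (c \<cdot>\<^sub>m M)). c \<cdot>\<^sub>m M *\<^sub>v v = 0\<^sub>v (dim_row (c \<cdot>\<^sub>m M)) \<longrightarrow> v = 0\<^sub>v (dim_col (c \<cdot>\<^sub>m M))"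
    and v: "v \<in> carrier_vec (dim_col M)" and e: "M *\<^sub>v v = 0\<^sub>v (dim_row M)"
  have "c \<cdot>\<^sub>m M *\<^sub>v v = 0\<^sub>v (dim_row M)"
  proof (rule eq_vecI)
    fix i assume i: "i < dim_vec (0\<^sub>v (dim_row M))"
    have "(M *\<^sub>v v) $ i = 0" using e i by simp
    hence "row M i \<bullet> v = 0" using i by simp
    moreover have "row (c \<cdot>\<^sub>m M) i \<bullet> v = c * (row M i \<bullet> v)"
      using i v by (auto simp: scalar_prod_def sum_distrib_left ac_simps)
    ultimately show "(c \<cdot>\<^sub>m M *\<^sub>v v) $ i = 0\<^sub>v (dim_row M) $ i" using i by simp
  qed auto
  thus "v = 0\<^sub>v (dim_col M)" using I v by auto
qed

lemma spd_quad_invm: assumes A: "spd n A" and X: "X \<in> carrier_mat n m" and I: "inj_m X"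
  shows "invm (transpose_mat X * A * X) m" "transpose_mat (transpose_mat X * A * X) = transpose_mat X * A * X"
proof -
  have Ac: "A \<in> carrier_mat n n" and At: "transpose_mat A = A" using A unfolding spd_def by auto
  have M: "transpose_mat X * A * X \<in> carrier_mat m m" using Ac X by auto
  show "transpose_mat (transpose_mat X * A * X) = transpose_mat X * A * X"
    using Ac X At by (simp add: mtrans_mult massoc)
  have "inj_m (transpose_mat X * A * X)" unfolding inj_m_def
  proof (intro ballI impI)
    fix v assume v: "v \<in> carrier_vec (dim_col (transpose_mat X * A * X))"
      and e: "transpose_mat X * A * X *\<^sub>v v = 0\<^sub>v (dim_row (transpose_mat X * A * X))"
    have vc: "v \<in> carrier_vec m" using v X by auto
    define w where "w = X *\<^sub>v v"
    have wc: "w \<in> carrier_vec n" using X vc unfolding w_def by auto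
    have "transpose_mat X * A * X *\<^sub>v v = transpose_mat X *\<^sub>v (A *\<^sub>v w)"
    proof -
      have "transpose_mat X * A * X *\<^sub>v v = (transpose_mat X * A) *\<^sub>v (X *\<^sub>v v)"
        by (rule assoc_mult_mat_vec) (use X Ac vc in auto)
      also have "\<dots> = transpose_mat X *\<^sub>v (A *\<^sub>v w)" unfolding w_def
        by (rule assoc_mult_mat_vec) (use X Ac vc in auto)
      finally show ?thesis .
    qed
    hence e2: "transpose_mat X *\<^sub>v (A *\<^sub>v w) = 0\<^sub>v m" using e X by simp
    have "w \<bullet> (A *\<^sub>v w) = (transpose_mat X *\<^sub>v (A *\<^sub>v w)) \<bullet> v"
      using transpose_vec_mult_scalar[OF X vc, of "A *\<^sub>v w"] Ac wc X vc
        comm_scalar_prod[of w n "A *\<^sub>v w"] unfolding w_def by auto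
    also have "\<dots> = 0" unfolding e2 using vc by simp
    finally have "w \<bullet> (A *\<^sub>v w) = 0" .
    moreover have "w \<noteq> 0\<^sub>v n \<Longrightarrow> w \<bullet> (A *\<^sub>v w) > 0" using A wc unfolding spd_def by blast
    ultimately have "w = 0\<^sub>v n" by force
    thus "v = 0\<^sub>v (dim_col (transpose_mat X * A * X))"
      using I vc X unfolding inj_m_def w_def by auto
  qed
  thus "invm (transpose_mat X * A * X) m" using inj_invm[OF M] by simp
qed


section \<open>Lanczos setting\<close>

fun lanczos_U :: "(nat \<Rightarrow> real mat) \<Rightarrow> (nat \<Rightarrow> real mat) \<Rightarrow> (nat \<Rightarrow> real mat) \<Rightarrow> nat \<Rightarrow> real mat" where
  "lanczos_U V Om G 0 = V 1"
| "lanczos_U V Om G (Suc j) = V (Suc (Suc j)) - lanczos_U V Om G j * minv (lanczos_Delta Om G (Suc j)) * transpose_mat (G (Suc j))"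

locale LZ =
  fixes n m K :: nat and A R0 :: "real mat" and V G Om :: "nat \<Rightarrow> real mat"
  assumes A: "spd n A"
    and BL: "block_lanczos n m A R0 V G Om K"
begin

definition Wp :: "nat \<Rightarrow> real mat" where
  "Wp j = (A * V j - V (j - 1) * transpose_mat (G (j - 1))) - V j * Om j"

lemma Ac: "A \<in> carrier_mat n n" and At: "transpose_mat A = A"
  using A unfolding spd_def by auto

lemma dimA[simp]: "dim_row A = n" "dim_col A = n" using Ac by auto

lemma V0: "V 0 = 0\<^sub>m n m" using BL unfolding block_lanczos_def by auto

lemma Vc: "j \<le> K \<Longrightarrow> V j \<in> carrier_mat n m"
proof -
  assume j: "j \<le> K"
  show ?thesis
  proof (cases j)
    case 0 thus ?thesis using V0 by auto
  next
    case (Suc i)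
    show ?thesis
    proof (cases i)
      case 0 thus ?thesis using BL Suc unfolding block_lanczos_def by auto
    next
      case (Suc i') with \<open>j = Suc i\<close> j BL show ?thesis unfolding block_lanczos_def
        by (metis Suc_le_lessD le_add1 plus_1_eq_Suc)
    qed
  qed
qed

lemma dimV[simp]: "j \<le> K \<Longrightarrow> dim_row (V j) = n" "j \<le> K \<Longrightarrow> dim_col (V j) = m"
  using Vc by auto

lemma Gc: "j < K \<Longrightarrow> G j \<in> carrier_mat m m"
proof -
  assume j: "j < K"
  show ?thesis
  proof (cases j)
    case 0 thus ?thesis using BL unfolding block_lanczos_def by auto
  next
    case (Suc i) thus ?thesis using BL j unfolding block_lanczos_def
      by (metis One_nat_def Suc_le_eq Suc_pred bot_nat_0.not_eq_extremum diff_Suc_1 nat.distinct(1))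
  qed
qed

lemma dimG[simp]: "j < K \<Longrightarrow> dim_row (G j) = m" "j < K \<Longrightarrow> dim_col (G j) = m"
  using Gc by auto

lemma Om_eq: "1 \<le> j \<Longrightarrow> j \<le> K \<Longrightarrow> Om j = transpose_mat (V j) * (A * V j - V (j - 1) * transpose_mat (G (j - 1)))"
  using BL unfolding block_lanczos_def by auto

lemma dimOm[simp]: "1 \<le> j \<Longrightarrow> j \<le> K \<Longrightarrow> dim_row (Om j) = m" "1 \<le> j \<Longrightarrow> j \<le> K \<Longrightarrow> dim_col (Om j) = m"
  using Om_eq by auto

lemma Omc: "1 \<le> j \<Longrightarrow> j \<le> K \<Longrightarrow> Om j \<in> carrier_mat m m"
  by (rule carrier_matI) auto

lemma VV: "1 \<le> j \<Longrightarrow> j \<le> K \<Longrightarrow> transpose_mat (V j) * V j = 1\<^sub>m m"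
proof -
  assume j: "1 \<le> j" "j \<le> K"
  show ?thesis
  proof (cases "j = 1")
    case True thus ?thesis using BL unfolding block_lanczos_def by auto
  next
    case False
    then obtain i where i: "j = Suc i" "1 \<le> i" "i < K" using j by (cases j) auto
    thus ?thesis using BL unfolding block_lanczos_def by auto
  qed
qed

lemma QR: "1 \<le> j \<Longrightarrow> j < K \<Longrightarrow> V (Suc j) * G j = Wp j"
  using BL unfolding block_lanczos_def Wp_def by auto

lemma V1G0: "V 1 * G 0 = R0" using BL unfolding block_lanczos_def by auto

lemma dimWp[simp]: "1 \<le> j \<Longrightarrow> j \<le> K \<Longrightarrow> dim_row (Wp j) = n" "1 \<le> j \<Longrightarrow> j \<le> K \<Longrightarrow> dim_col (Wp j) = m"
  unfolding Wp_def by auto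

definition orth :: "nat \<Rightarrow> bool" where
  "orth p \<longleftrightarrow> (\<forall>a b. 1 \<le> a \<longrightarrow> a \<le> p \<longrightarrow> 1 \<le> b \<longrightarrow> b \<le> p \<longrightarrow>
      transpose_mat (V a) * V b = (if a = b then 1\<^sub>m m else 0\<^sub>m m m))"

lemma orthD: "orth p \<Longrightarrow> 1 \<le> a \<Longrightarrow> a \<le> p \<Longrightarrow> 1 \<le> b \<Longrightarrow> b \<le> p \<Longrightarrow> a \<noteq> b \<Longrightarrow> transpose_mat (V a) * V b = 0\<^sub>m m m"
  unfolding orth_def by auto

lemma orthZ: assumes "orth p" "a \<le> p" "b \<le> p" "a \<noteq> b" "p \<le> K"
  shows "transpose_mat (V a) * V b = 0\<^sub>m m m"
proof (cases "a = 0")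
  case True thus ?thesis using V0 assms by simp
next
  case False
  show ?thesis
  proof (cases "b = 0")
    case True thus ?thesis using V0 assms by simp
  next
    case False2: False
    thus ?thesis using orthD[of p a b] assms False by simp
  qed
qed

lemma Om_VAV: assumes o: "orth p" and p: "1 \<le> p" "p \<le> K" shows "Om p = transpose_mat (V p) * (A * V p)"
proof -
  have z: "transpose_mat (V p) * V (p - 1) = 0\<^sub>m m m" using orthZ[of p p "p - 1"] o p by auto
  have "Om p = transpose_mat (V p) * (A * V p) - transpose_mat (V p) * (V (p - 1) * transpose_mat (G (p - 1)))"
    using Om_eq[OF p] p by (simp add: mdistl_minus)
  also have "transpose_mat (V p) * (V (p - 1) * transpose_mat (G (p - 1))) = 0\<^sub>m m m"
    using rassoc[OF z] p by simp
  finally show ?thesis using p by (simp add: mminus0r)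
qed


lemma AV_expand: assumes a: "1 \<le> a" "a < K"
  shows "A * V a = V (Suc a) * G a + V (a - 1) * transpose_mat (G (a - 1)) + V a * Om a"
  unfolding QR[OF a] Wp_def using a by (intro eq_matI) auto

lemma VtA: "a \<le> K \<Longrightarrow> transpose_mat (V a) * A = transpose_mat (A * V a)"
  using At by (simp add: mtrans_mult)

lemma Wperp: assumes o: "orth p" and p: "1 \<le> p" "p \<le> K" and a: "1 \<le> a" "a \<le> p"
  shows "transpose_mat (V a) * Wp p = 0\<^sub>m m m"
proof -
  have e1: "transpose_mat (V a) * Wp p = transpose_mat (V a) * (A * V p)
     - transpose_mat (V a) * V (p - 1) * transpose_mat (G (p - 1)) - transpose_mat (V a) * V p * Om p"
    unfolding Wp_def using p a by (simp add: mdistl_minus massoc)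
  show ?thesis
  proof (cases "a = p")
    case True
    have z: "transpose_mat (V p) * V (p - 1) = 0\<^sub>m m m" using orthZ[of p p "p - 1"] o p by auto
    show ?thesis unfolding e1 unfolding True z VV[OF p] Om_VAV[OF o p, symmetric] using p
      by (intro eq_matI) auto
  next
    case False
    hence ap: "a < p" using a by simp
    have z1: "transpose_mat (V a) * V p = 0\<^sub>m m m" using orthZ[of p a p] o p a ap by auto
    have z2: "transpose_mat (V (a - 1)) * V p = 0\<^sub>m m m" using orthZ[of p "a - 1" p] o p a ap by auto
    have "transpose_mat (V a) * (A * V p) = transpose_mat (A * V a) * V p"
      using VtA[of a] ap p by (simp add: massoc[symmetric])
    also have "\<dots> = transpose_mat (G a) * (transpose_mat (V (Suc a)) * V p)"
      unfolding AV_expand[OF a(1) less_le_trans[OF ap p(2)]] using ap p a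
      by (simp add: mtrans_add mtrans_mult mdistr massoc z1 z2[simplified] madd0r)
    finally have e2: "transpose_mat (V a) * (A * V p) = transpose_mat (G a) * (transpose_mat (V (Suc a)) * V p)" .
    show ?thesis
    proof (cases "Suc a = p")
      case True
      have o1: "transpose_mat (V (Suc a)) * V p = 1\<^sub>m m" using VV[of p] True p by simp
      have pa: "p - 1 = a" using True by simp
      have o2: "transpose_mat (V a) * V (p - 1) = 1\<^sub>m m" unfolding pa using VV[of a] True a p by simp
      show ?thesis unfolding e1 e2 o1 o2 z1 using a p True by (intro eq_matI) auto
    next
      case False
      have o1: "transpose_mat (V (Suc a)) * V p = 0\<^sub>m m m" using orthZ[of p "Suc a" p] o p a ap False by auto
      have o2: "transpose_mat (V a) * V (p - 1) = 0\<^sub>m m m" using orthZ[of p a "p - 1"] o p a ap False by auto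
      show ?thesis unfolding e1 e2 o1 o2 z1 using a p False ap by (intro eq_matI) auto
    qed
  qed
qed


abbreviation "Dl j \<equiv> lanczos_Delta Om G j"
abbreviation "U j \<equiv> lanczos_U V Om G j"
abbreviation "Ph j \<equiv> lanczos_Phi Om G j"

definition invD :: "nat \<Rightarrow> bool" where
  "invD p \<longleftrightarrow> (\<forall>i. 1 \<le> i \<longrightarrow> i \<le> p \<longrightarrow> invm (Dl i) m \<and> transpose_mat (Dl i) = Dl i)"

lemma invD_mono: "invD p \<Longrightarrow> q \<le> p \<Longrightarrow> invD q" unfolding invD_def by auto

lemma invDD: assumes "invD p" "1 \<le> i" "i \<le> p"
  shows "Dl i \<in> carrier_mat m m" "minv (Dl i) \<in> carrier_mat m m" "dim_row (Dl i) = m" "dim_col (Dl i) = m"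
    "dim_row (minv (Dl i)) = m" "dim_col (minv (Dl i)) = m"
    "Dl i * minv (Dl i) = 1\<^sub>m m" "minv (Dl i) * Dl i = 1\<^sub>m m"
    "transpose_mat (Dl i) = Dl i" "transpose_mat (minv (Dl i)) = minv (Dl i)" "invm (Dl i) m"
  using assms invm_carrier[of "Dl i" m] invm_sym[of "Dl i" m] unfolding invD_def by auto

lemma orth_mono: "orth p \<Longrightarrow> q \<le> p \<Longrightarrow> orth q" unfolding orth_def by auto

lemma Uc: "invD j \<Longrightarrow> Suc j \<le> K \<Longrightarrow> U j \<in> carrier_mat n m"
proof (induction j)
  case 0 thus ?case using Vc[of 1] by simp
next
  case (Suc j)
  note d = invDD[OF Suc.prems(1), of "Suc j"]
  have "U j \<in> carrier_mat n m" using Suc invD_mono[OF Suc.prems(1)] by simp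
  hence "dim_row (U j) = n" "dim_col (U j) = m" by auto
  thus ?case using Suc.prems d by (intro carrier_matI) simp_all
qed

lemma dimU[simp]: "invD j \<Longrightarrow> Suc j \<le> K \<Longrightarrow> dim_row (U j) = n"
  "invD j \<Longrightarrow> Suc j \<le> K \<Longrightarrow> dim_col (U j) = m"
  using Uc by auto

lemma Uperp: assumes X: "X \<in> carrier_mat n c"
  shows "invD j \<Longrightarrow> Suc j \<le> K \<Longrightarrow> (\<forall>a. 1 \<le> a \<longrightarrow> a \<le> Suc j \<longrightarrow> transpose_mat (V a) * X = 0\<^sub>m m c)
    \<Longrightarrow> transpose_mat (U j) * X = 0\<^sub>m m c"
proof (induction j)
  case 0 thus ?case by simp
next
  case (Suc j)
  note d = invDD[OF Suc.prems(1), of "Suc j"]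
  have I: "invD j" using invD_mono[OF Suc.prems(1)] by simp
  have ih: "transpose_mat (U j) * X = 0\<^sub>m m c" using Suc I by simp
  have v: "transpose_mat (V (Suc (Suc j))) * X = 0\<^sub>m m c" using Suc.prems by simp
  have "dim_row (U j) = n" "dim_col (U j) = m" using Uc[OF I] Suc.prems by auto
  thus ?case using Suc.prems d I X
    by (simp add: malg ih v)
qed

lemma UV: assumes I: "invD j" and o: "orth (Suc j)" and jK: "Suc j \<le> K"
  shows "transpose_mat (U j) * V (Suc j) = 1\<^sub>m m"
proof (cases j)
  case 0 thus ?thesis using VV[of 1] jK by simp
next
  case (Suc i)
  note d = invDD[OF I, of j]
  have I': "invD i" using invD_mono[OF I] Suc by simp
  have z: "transpose_mat (U i) * V (Suc (Suc i)) = 0\<^sub>m m m"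
    using Uperp[OF Vc[OF jK] I'] Suc jK orthZ[OF o] by simp
  show ?thesis using Suc I' d jK VV[of "Suc j"]
    by (simp add: malg z)
qed


lemma dimDl[simp]: "1 \<le> i \<Longrightarrow> i \<le> K \<Longrightarrow> dim_row (Dl i) = m"
  "1 \<le> i \<Longrightarrow> i \<le> K \<Longrightarrow> dim_col (Dl i) = m"
proof -
  assume i: "1 \<le> i" "i \<le> K"
  have "dim_row (Dl i) = m \<and> dim_col (Dl i) = m"
  proof (cases i)
    case 0 thus ?thesis using i by simp
  next
    case (Suc j)
    thus ?thesis using i by (cases j) auto
  qed
  thus "dim_row (Dl i) = m" "dim_col (Dl i) = m" by auto
qed

lemma Qp: "invD i \<Longrightarrow> Suc i \<le> K \<Longrightarrow> A * U i = V (Suc i) * Dl (Suc i) + Wp (Suc i)"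
proof (induction i)
  case 0
  show ?case unfolding Wp_def using V0 0 by (intro eq_matI) auto
next
  case (Suc i)
  note d = invDD[OF Suc.prems(1), of "Suc i"]
  have I: "invD i" using invD_mono[OF Suc.prems(1)] by simp
  have ih: "A * U i = V (Suc i) * Dl (Suc i) + Wp (Suc i)" using Suc I by simp
  have qr: "Wp (Suc i) = V (Suc (Suc i)) * G (Suc i)" using QR[of "Suc i"] Suc.prems by simp
  have du: "dim_row (U i) = n" "dim_col (U i) = m" using Uc[OF I] Suc.prems by auto
  have l: "A * U (Suc i) = A * V (Suc (Suc i)) - (V (Suc i) * transpose_mat (G (Suc i))
     + V (Suc (Suc i)) * (G (Suc i) * (minv (Dl (Suc i)) * transpose_mat (G (Suc i)))))"
    using Suc.prems d du by (simp add: malg rassoc[OF ih] qr rassoc[OF d(7)])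
  have r: "V (Suc (Suc i)) * Dl (Suc (Suc i)) + Wp (Suc (Suc i)) = 
     V (Suc (Suc i)) * Om (Suc (Suc i)) - V (Suc (Suc i)) * (G (Suc i) * (minv (Dl (Suc i)) * transpose_mat (G (Suc i))))
     + ((A * V (Suc (Suc i)) - V (Suc i) * transpose_mat (G (Suc i))) - V (Suc (Suc i)) * Om (Suc (Suc i)))"
    using Suc.prems d du unfolding Wp_def by (simp add: malg)
  show ?case unfolding l r using Suc.prems d du by (intro eq_matI) auto
qed


lemma UAU: assumes I: "invD j" and o: "orth (Suc j)" and jK: "Suc j \<le> K"
  shows "transpose_mat (U j) * (A * U j) = Dl (Suc j)"
proof -
  have du: "dim_row (U j) = n" "dim_col (U j) = m" using Uc[OF I jK] by auto
  have Wc: "Wp (Suc j) \<in> carrier_mat n m" using jK by (intro carrier_matI) auto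
  have z: "transpose_mat (U j) * Wp (Suc j) = 0\<^sub>m m m"
    using Uperp[OF Wc I jK] Wperp[OF o _ jK] by simp
  have uv: "transpose_mat (U j) * V (Suc j) = 1\<^sub>m m" using UV[OF I o jK] .
  show ?thesis unfolding Qp[OF I jK] using du jK
    by (simp add: malg z rassoc[OF uv])
qed

lemma invD_step: assumes I: "invD j" and o: "orth (Suc j)" and jK: "Suc j \<le> K"
  shows "invD (Suc j)"
proof -
  have Uc': "U j \<in> carrier_mat n m" using Uc[OF I jK] .
  have uv: "transpose_mat (U j) * V (Suc j) = 1\<^sub>m m" using UV[OF I o jK] .
  have vu: "transpose_mat (V (Suc j)) * U j = 1\<^sub>m m"
    using arg_cong[OF uv, of transpose_mat] Uc' jK by (simp add: mtrans_mult)
  have inj: "inj_m (U j)" by (rule left_inv_inj[OF _ ]) (use vu Uc' jK in auto)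
  note q = spd_quad_invm[OF A Uc' inj]
  have e: "transpose_mat (U j) * A * U j = Dl (Suc j)"
    using UAU[OF I o jK] Uc' by (simp add: massoc)
  show ?thesis unfolding invD_def
  proof (intro allI impI)
    fix i assume i: "1 \<le> i" "i \<le> Suc j"
    show "invm (Dl i) m \<and> transpose_mat (Dl i) = Dl i"
    proof (cases "i = Suc j")
      case True thus ?thesis using q e by simp
    next
      case False thus ?thesis using I i unfolding invD_def by auto
    qed
  qed
qed

end

lemma bcg_R_Suc: "bcg_R A B X0 (Suc j) = bcg_R A B X0 j - A * bcg_P A B X0 j * bcg_Upsilon A B X0 j"
  unfolding bcg_R_def bcg_P_def bcg_Upsilon_def
  by (cases "bcg A B X0 j") (auto simp: Let_def)

lemma bcg_P_Suc: "bcg_P A B X0 (Suc j) = bcg_R A B X0 (Suc j) + bcg_P A B X0 j *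
   (minv (transpose_mat (bcg_R A B X0 j) * bcg_R A B X0 j) * (transpose_mat (bcg_R A B X0 (Suc j)) * bcg_R A B X0 (Suc j)))"
  unfolding bcg_R_def bcg_P_def bcg_Upsilon_def
  by (cases "bcg A B X0 j") (auto simp: Let_def)

lemma bcg_0: "bcg_R A B X0 0 = B - A * X0" "bcg_P A B X0 0 = B - A * X0"
  unfolding bcg_R_def bcg_P_def by auto


locale LZC = LZ n m "Suc k" A "bcg_R A B X0 0" V G Om for n m k A B X0 V G Om +
  assumes Bc: "B \<in> carrier_mat n m" and X0c: "X0 \<in> carrier_mat n m"
    and FR: "\<forall>j \<le> k. full_col_rank (bcg_R A B X0 j)"
begin

abbreviation "R j \<equiv> bcg_R A B X0 j"
abbreviation "P j \<equiv> bcg_P A B X0 j"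

definition MI :: "nat \<Rightarrow> bool" where
  "MI j \<longleftrightarrow> orth (Suc j) \<and> invD (Suc j) \<and> invm (Ph j) m \<and>
     (\<exists>\<sigma>::real. \<sigma> * \<sigma> = 1 \<and> R j = \<sigma> \<cdot>\<^sub>m (V (Suc j) * Ph j) \<and> P j = \<sigma> \<cdot>\<^sub>m (U j * Ph j))"

lemma MI_0: "MI 0"
proof -
  have o: "orth 1" unfolding orth_def using VV[of 1] by auto
  have v1: "V 1 \<in> carrier_mat n m" using Vc[of 1] by simp
  have g0: "G 0 \<in> carrier_mat m m" using Gc[of 0] by simp
  have "inj_m (V 1 * G 0)" using fcr_inj FR V1G0 by auto
  hence "inj_m (G 0)" by (rule inj_mult_right) simp
  hence ig: "invm (G 0) m" using inj_invm[OF g0] by simp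
  have iD: "invD 1" using invD_step[of 0] o unfolding invD_def by auto
  have "R 0 = 1 \<cdot>\<^sub>m (V 1 * Ph 0)" using V1G0 by (simp add: msmult_one)
  moreover have "P 0 = 1 \<cdot>\<^sub>m (U 0 * Ph 0)" using V1G0 bcg_0 by (simp add: msmult_one)
  ultimately show ?thesis unfolding MI_def using o iD ig by (intro conjI exI[of _ "1::real"]) auto
qed


lemma MI_Suc: assumes M: "MI j" and jk: "Suc j \<le> k" shows "MI (Suc j)"
proof -
  from M obtain \<sigma> :: real where o: "orth (Suc j)" and iD: "invD (Suc j)" and iP: "invm (Ph j) m"
    and s: "\<sigma> * \<sigma> = 1" and Rj: "R j = \<sigma> \<cdot>\<^sub>m (V (Suc j) * Ph j)" and Pj: "P j = \<sigma> \<cdot>\<^sub>m (U j * Ph j)"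
    unfolding MI_def by blast
  have jK: "Suc (Suc j) \<le> Suc k" using jk by simp
  have I: "invD j" using invD_mono[OF iD] by simp
  note d = invDD[OF iD, of "Suc j"]
  note pc = invm_carrier[OF iP]
  have du: "dim_row (U j) = n" "dim_col (U j) = m" using Uc[OF I] jK by auto
  have uau: "transpose_mat (U j) * (A * U j) = Dl (Suc j)" using UAU[OF I o] jK by simp
  have vv: "transpose_mat (V (Suc j)) * V (Suc j) = 1\<^sub>m m" using VV[of "Suc j"] jK by simp
  have PAP: "transpose_mat (P j) * A * P j = transpose_mat (Ph j) * (Dl (Suc j) * Ph j)"
    unfolding Pj using du pc d jK
    by (simp add: malg rassoc2[OF uau] msmult_smult s msmult_one)
  have RR: "transpose_mat (R j) * R j = transpose_mat (Ph j) * Ph j"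
    unfolding Rj using pc jK
    by (simp add: malg rassoc[OF vv] msmult_smult s msmult_one)
  have t1: "transpose_mat (minv (Ph j)) * transpose_mat (Ph j) = 1\<^sub>m m"
    using pc by (simp add: mtrans_mult[symmetric])
  have mi: "minv (transpose_mat (Ph j) * (Dl (Suc j) * Ph j)) = minv (Ph j) * minv (Dl (Suc j)) * transpose_mat (minv (Ph j))"
    using invm_mult[OF d(11) iP] invm_mult(2)[OF invm_trans(1)[OF iP] invm_mult(1)[OF d(11) iP]] invm_trans(2)[OF iP]
    by simp
  have Ups: "bcg_Upsilon A B X0 j = minv (Ph j) * (minv (Dl (Suc j)) * Ph j)"
    unfolding bcg_Upsilon_def PAP RR mi using pc d
    by (simp add: malg rassoc[OF t1])
  have qp: "A * U j = V (Suc j) * Dl (Suc j) + V (Suc (Suc j)) * G (Suc j)"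
    using Qp[OF I] QR[of "Suc j"] jK by simp
  have R1: "R (Suc j) = (- \<sigma>) \<cdot>\<^sub>m (V (Suc (Suc j)) * Ph (Suc j))"
  proof -
    have "R (Suc j) = \<sigma> \<cdot>\<^sub>m (V (Suc j) * Ph j) - \<sigma> \<cdot>\<^sub>m (V (Suc j) * Ph j + V (Suc (Suc j)) * (G (Suc j) * (minv (Dl (Suc j)) * Ph j)))"
      unfolding bcg_R_Suc Ups Rj Pj using pc d du jK
      by (simp add: malg rassoc[OF pc(7)] rassoc[OF qp] rassoc[OF d(7)])
    also have "\<dots> = (- \<sigma>) \<cdot>\<^sub>m (V (Suc (Suc j)) * (G (Suc j) * (minv (Dl (Suc j)) * Ph j)))"
      using pc d jK by (intro smult_cancel1) auto
    also have "G (Suc j) * (minv (Dl (Suc j)) * Ph j) = Ph (Suc j)"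
      using pc d jK by (simp add: lanczos_Pi_def massoc)
    finally show ?thesis .
  qed
  have phe: "Ph (Suc j) = G (Suc j) * (minv (Dl (Suc j)) * Ph j)"
    using pc d jK by (simp add: lanczos_Pi_def massoc)
  have dph: "dim_row (Ph (Suc j)) = m" "dim_col (Ph (Suc j)) = m" using phe pc d jK by auto
  have sn: "- \<sigma> \<noteq> 0" using s by auto
  have "inj_m (R (Suc j))" using FR jk fcr_inj by auto
  hence "inj_m (V (Suc (Suc j)) * Ph (Suc j))" unfolding R1 using inj_smult sn by blast
  hence "inj_m (Ph (Suc j))" by (rule inj_mult_right) (use jK dph in simp)
  moreover have "Ph (Suc j) \<in> carrier_mat m m" by (rule carrier_matI) (use dph in simp_all)
  ultimately have iP1: "invm (Ph (Suc j)) m" using inj_invm[of "Ph (Suc j)" m] by simp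
  note pc1 = invm_carrier[OF iP1]
  have gi: "G (Suc j) * (minv (Dl (Suc j)) * Ph j * minv (Ph (Suc j))) = 1\<^sub>m m"
  proof -
    have "G (Suc j) * (minv (Dl (Suc j)) * Ph j * minv (Ph (Suc j))) = G (Suc j) * (minv (Dl (Suc j)) * Ph j) * minv (Ph (Suc j))"
      using pc d jK pc1 by (simp add: massoc)
    also have "\<dots> = 1\<^sub>m m" using phe pc1 by simp
    finally show ?thesis .
  qed
  have c1: "G (Suc j) \<in> carrier_mat m m" using Gc[of "Suc j"] jK by simp
  have c2: "minv (Dl (Suc j)) * Ph j * minv (Ph (Suc j)) \<in> carrier_mat m m"
    by (rule carrier_matI) (use pc d pc1 in simp_all)
  have iG: "invm (G (Suc j)) m" using minv_unique(1)[OF c1 c2 gi] .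
  note gc = invm_carrier[OF iG]
  have perp: "transpose_mat (V a) * V (Suc (Suc j)) = 0\<^sub>m m m" if a: "1 \<le> a" "a \<le> Suc j" for a
  proof -
    have w: "transpose_mat (V a) * V (Suc (Suc j)) * G (Suc j) = 0\<^sub>m m m"
      using Wperp[OF o _ _ a] QR[of "Suc j"] jK a by (simp add: massoc)
    have "transpose_mat (V a) * V (Suc (Suc j)) = transpose_mat (V a) * V (Suc (Suc j)) * G (Suc j) * minv (G (Suc j))"
      using gc a jK by (simp add: massoc)
    also have "\<dots> = 0\<^sub>m m m" unfolding w using gc by simp
    finally show ?thesis .
  qed
  have o2: "orth (Suc (Suc j))" unfolding orth_def
  proof (intro allI impI)
    fix a b assume ab: "1 \<le> a" "a \<le> Suc (Suc j)" "1 \<le> b" "b \<le> Suc (Suc j)"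
    show "transpose_mat (V a) * V b = (if a = b then 1\<^sub>m m else 0\<^sub>m m m)"
    proof (cases "a \<le> Suc j \<and> b \<le> Suc j")
      case True thus ?thesis using o ab unfolding orth_def by auto
    next
      case False
      hence "a = Suc (Suc j) \<or> b = Suc (Suc j)" using ab by auto
      thus ?thesis
      proof
        assume a2: "a = Suc (Suc j)"
        show ?thesis
        proof (cases "b = Suc (Suc j)")
          case True thus ?thesis using a2 VV[of "Suc (Suc j)"] jK by simp
        next
          case False
          hence "b \<le> Suc j" using ab by simp
          hence "transpose_mat (transpose_mat (V b) * V a) = 0\<^sub>m m m" using perp ab a2 by simp
          thus ?thesis using False a2 jK ab by (simp add: mtrans_mult)
        qed
      next
        assume b2: "b = Suc (Suc j)"
        show ?thesis
        proof (cases "a = Suc (Suc j)")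
          case True thus ?thesis using b2 VV[of "Suc (Suc j)"] jK by simp
        next
          case False
          hence "a \<le> Suc j" using ab by simp
          thus ?thesis using perp ab b2 by simp
        qed
      qed
    qed
  qed
  have iD2: "invD (Suc (Suc j))" using invD_step[OF iD o2] jK by simp
  have vv2: "transpose_mat (V (Suc (Suc j))) * V (Suc (Suc j)) = 1\<^sub>m m" using VV[of "Suc (Suc j)"] jK by simp
  have RR1: "transpose_mat (R (Suc j)) * R (Suc j) = transpose_mat (Ph (Suc j)) * Ph (Suc j)"
    unfolding R1 using pc1 jK
    by (simp add: malg rassoc[OF vv2] msmult_smult s msmult_one)
  have mi2: "minv (transpose_mat (Ph j) * Ph j) = minv (Ph j) * transpose_mat (minv (Ph j))"
    using invm_mult(2)[OF invm_trans(1)[OF iP] iP] invm_trans(2)[OF iP] by simp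
  have pht: "transpose_mat (Ph (Suc j)) = transpose_mat (Ph j) * (minv (Dl (Suc j)) * transpose_mat (G (Suc j)))"
    unfolding phe using pc d jK by (simp add: malg)
  have P1: "P (Suc j) = (- \<sigma>) \<cdot>\<^sub>m (U (Suc j) * Ph (Suc j))"
  proof -
    have "P (Suc j) = (- \<sigma>) \<cdot>\<^sub>m (V (Suc (Suc j)) * Ph (Suc j))
        + \<sigma> \<cdot>\<^sub>m (U j * (minv (Dl (Suc j)) * (transpose_mat (G (Suc j)) * Ph (Suc j))))"
      unfolding bcg_P_Suc RR RR1 mi2 unfolding R1 Pj using pc d jK du pc1
      by (simp del: lanczos_Phi.simps add: malg pht rassoc[OF pc(7)] rassoc[OF t1])
    also have "\<dots> = (- \<sigma>) \<cdot>\<^sub>m (V (Suc (Suc j)) * Ph (Suc j) - U j * (minv (Dl (Suc j)) * (transpose_mat (G (Suc j)) * Ph (Suc j))))"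
      using pc d jK du pc1 by (intro smult_cancel2) auto
    also have "V (Suc (Suc j)) * Ph (Suc j) - U j * (minv (Dl (Suc j)) * (transpose_mat (G (Suc j)) * Ph (Suc j)))
       = U (Suc j) * Ph (Suc j)"
      using pc d jK du pc1 by (simp del: lanczos_Phi.simps add: malg)
    finally show ?thesis .
  qed
  have s2: "(- \<sigma>) * (- \<sigma>) = 1" using s by simp
  show ?thesis unfolding MI_def using o2 iD2 iP1 s2 R1 P1 by blast
qed

end


section \<open>Schur complement inverse\<close>

lemma schur_inv:
  fixes T C Q :: "real mat"
  assumes T: "invm T N" and C: "C \<in> carrier_mat N p" and Qc: "Q \<in> carrier_mat p p"
    and D: "invm (Q - transpose_mat C * (minv T * C)) p"
  defines "S \<equiv> minv T" and "Di \<equiv> minv (Q - transpose_mat C * (minv T * C))"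
  shows "invm (four_block_mat T C (transpose_mat C) Q) (N + p)"
    "minv (four_block_mat T C (transpose_mat C) Q) =
    four_block_mat (S + S * (C * (Di * (transpose_mat C * S)))) ((-1) \<cdot>\<^sub>m (S * (C * Di)))
       ((-1) \<cdot>\<^sub>m (Di * (transpose_mat C * S))) Di"
proof -
  note t0 = invm_carrier[OF T, folded S_def]
  note d0 = invm_carrier[OF D, folded Di_def S_def]
  note t = t0(3-8) and d = d0(3-8)
  have dc: "dim_row C = N" "dim_col C = p" using C by auto
  have dQ: "dim_row Q = p" "dim_col Q = p" using Qc by auto
  define Dm where "Dm = Q - transpose_mat C * (S * C)"
  have dDm: "dim_row Dm = p" "dim_col Dm = p" unfolding Dm_def using dQ dc by auto
  have cs: "transpose_mat C * (S * C) = Q - Dm" unfolding Dm_def using dc dQ t by (intro eq_matI) auto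
  have dd: "Dm * Di = 1\<^sub>m p" using d0(7) unfolding S_def Dm_def by simp
  have csx: "transpose_mat C * (S * (C * X)) = Q * X - Dm * X" if "dim_row X = p" for X
    using rassoc2[OF cs] that dc t dDm dQ by (simp add: mdistr_minus)
  have ddx: "Dm * (Di * X) = X" if "dim_row X = p" for X
    using rassoc[OF dd] that d dDm by simp
  have tsx: "T * (S * X) = X" if "dim_row X = N" for X
    using rassoc[OF t0(7)] that t by simp
  let ?S' = "four_block_mat (S + S * (C * (Di * (transpose_mat C * S)))) ((-1) \<cdot>\<^sub>m (S * (C * Di)))
       ((-1) \<cdot>\<^sub>m (Di * (transpose_mat C * S))) Di"
  have e11: "T * (S + S * (C * (Di * (transpose_mat C * S)))) + C * ((-1) \<cdot>\<^sub>m (Di * (transpose_mat C * S))) = 1\<^sub>m N"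
  proof -
    have "T * (S + S * (C * (Di * (transpose_mat C * S)))) + C * ((-1) \<cdot>\<^sub>m (Di * (transpose_mat C * S)))
      = 1\<^sub>m N + C * (Di * (transpose_mat C * S)) + (-1) \<cdot>\<^sub>m (C * (Di * (transpose_mat C * S)))"
      using t d dc dQ by (simp add: malg tsx)
    also have "\<dots> = 1\<^sub>m N" using t d dc dQ by (intro eq_matI) auto
    finally show ?thesis .
  qed
  have e12: "T * ((-1) \<cdot>\<^sub>m (S * (C * Di))) + C * Di = 0\<^sub>m N p"
  proof -
    have "T * ((-1) \<cdot>\<^sub>m (S * (C * Di))) + C * Di = (-1) \<cdot>\<^sub>m (C * Di) + C * Di"
      using t d dc dQ by (simp add: malg tsx)
    also have "\<dots> = 0\<^sub>m N p" using t d dc dQ by (intro eq_matI) auto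
    finally show ?thesis .
  qed
  have e21: "transpose_mat C * (S + S * (C * (Di * (transpose_mat C * S)))) + Q * ((-1) \<cdot>\<^sub>m (Di * (transpose_mat C * S))) = 0\<^sub>m p N"
  proof -
    have "transpose_mat C * (S + S * (C * (Di * (transpose_mat C * S)))) + Q * ((-1) \<cdot>\<^sub>m (Di * (transpose_mat C * S)))
      = transpose_mat C * S + (Q * (Di * (transpose_mat C * S)) - transpose_mat C * S) + (-1) \<cdot>\<^sub>m (Q * (Di * (transpose_mat C * S)))"
      using t d dc dQ by (simp add: malg csx ddx)
    also have "\<dots> = 0\<^sub>m p N" using t d dc dQ by (intro eq_matI) auto
    finally show ?thesis .
  qed
  have e22: "transpose_mat C * ((-1) \<cdot>\<^sub>m (S * (C * Di))) + Q * Di = 1\<^sub>m p"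
  proof -
    have "transpose_mat C * ((-1) \<cdot>\<^sub>m (S * (C * Di))) + Q * Di = (-1) \<cdot>\<^sub>m (Q * Di - 1\<^sub>m p) + Q * Di"
      using t d dc dQ dDm by (simp add: malg csx ddx dd)
    also have "\<dots> = 1\<^sub>m p" using t d dc dQ by (intro eq_matI) auto
    finally show ?thesis .
  qed
  have "four_block_mat T C (transpose_mat C) Q * ?S' = four_block_mat (1\<^sub>m N) (0\<^sub>m N p) (0\<^sub>m p N) (1\<^sub>m p)"
    unfolding e11[symmetric] e12[symmetric] e21[symmetric] e22[symmetric]
    by (rule mult_four_block_mat; rule carrier_matI) (simp_all add: t d dc dQ)
  hence e: "four_block_mat T C (transpose_mat C) Q * ?S' = 1\<^sub>m (N + p)" by simp
  have c1: "four_block_mat T C (transpose_mat C) Q \<in> carrier_mat (N + p) (N + p)"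
    by (rule carrier_matI) (simp_all add: t dQ)
  have c2: "?S' \<in> carrier_mat (N + p) (N + p)"
    by (rule carrier_matI) (simp_all add: t d dc)
  show "invm (four_block_mat T C (transpose_mat C) Q) (N + p)" using minv_unique(1)[OF c1 c2 e] .
  show "minv (four_block_mat T C (transpose_mat C) Q) = ?S'" using minv_unique(2)[OF c1 c2 e] .
qed


section \<open>Block selection\<close>

definition Esel :: "nat \<Rightarrow> nat \<Rightarrow> nat \<Rightarrow> real mat" where
  "Esel m N i = mat (N * m) m (\<lambda>(r, b). if r = i * m + b then 1 else 0)"

lemma Esel_dims[simp]: "dim_row (Esel m N i) = N * m" "dim_col (Esel m N i) = m"
  unfolding Esel_def by auto

lemma sum_single: "x < (n::nat) \<Longrightarrow> (\<Sum>r = 0..<n. (if r = x then 1 else 0) * (f r :: real)) = f x"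
  by (simp add: if_distrib[of "\<lambda>c. c * _"] sum.delta cong: if_cong)

lemma sum_single': "(\<Sum>t = 0..<(m::nat). (g t :: real) * (if (r::nat) = x + t then 1 else 0)) = (if x \<le> r \<and> r < x + m then g (r - x) else 0)"
proof (cases "x \<le> r \<and> r < x + m")
  case True
  hence eq: "\<And>t. (r = x + t) = (t = r - x)" by auto
  have "(\<Sum>t = 0..<m. g t * (if r = x + t then 1 else 0)) = (\<Sum>t = 0..<m. if t = r - x then g t else 0)"
    unfolding eq by (intro sum.cong) auto
  also have "\<dots> = g (r - x)"
  proof -
    have "r - x < m" using True by linarith
    thus ?thesis by (simp add: sum.delta)
  qed
  finally show ?thesis using True by simp
next
  case False
  hence "(\<Sum>t = 0..<m. g t * (if r = x + t then 1 else 0)) = (\<Sum>t = 0..<m. 0)"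
    by (intro sum.cong) auto
  thus ?thesis using False by (simp only: if_False sum.neutral_const)
qed

lemma Et_mult: assumes M: "M \<in> carrier_mat (N * m) c" and i: "i < N"
  shows "transpose_mat (Esel m N i) * M = mat m c (\<lambda>(a, b). M $$ (i * m + a, b))"
proof (rule eq_matI)
  fix a b assume a: "a < dim_row (mat m c (\<lambda>(a, b). M $$ (i * m + a, b)))"
    and b: "b < dim_col (mat m c (\<lambda>(a, b). M $$ (i * m + a, b)))"
  have am: "a < m" and bc: "b < c" using a b by auto
  have lt: "i * m + a < N * m"
  proof -
    have "i * m + a < i * m + m" using am by simp
    also have "\<dots> = Suc i * m" by simp
    also have "\<dots> \<le> N * m" using i by (intro mult_le_mono1) simp
    finally show ?thesis .
  qed
  have "(transpose_mat (Esel m N i) * M) $$ (a, b) = (\<Sum>r = 0..<N * m. (if r = i * m + a then 1 else 0) * M $$ (r, b))"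
    using M am bc unfolding Esel_def by (simp add: scalar_prod_def)
  also have "\<dots> = M $$ (i * m + a, b)" using sum_single[OF lt] .
  finally show "(transpose_mat (Esel m N i) * M) $$ (a, b) = mat m c (\<lambda>(a, b). M $$ (i * m + a, b)) $$ (a, b)"
    using am bc by simp
qed (use M in auto)

lemma E_mult: assumes X: "X \<in> carrier_mat m c"
  shows "Esel m N i * X = mat (N * m) c (\<lambda>(r, b). if i * m \<le> r \<and> r < i * m + m then X $$ (r - i * m, b) else 0)"
proof (rule eq_matI)
  fix r b assume r: "r < dim_row (mat (N * m) c (\<lambda>(r, b). if i * m \<le> r \<and> r < i * m + m then X $$ (r - i * m, b) else 0))"
    and b: "b < dim_col (mat (N * m) c (\<lambda>(r, b). if i * m \<le> r \<and> r < i * m + m then X $$ (r - i * m, b) else 0))"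
  have rr: "r < N * m" and bc: "b < c" using r b by auto
  have "(Esel m N i * X) $$ (r, b) = (\<Sum>t = 0..<m. X $$ (t, b) * (if r = i * m + t then 1 else 0))"
    using X rr bc unfolding Esel_def by (simp add: scalar_prod_def mult.commute)
  also have "\<dots> = (if i * m \<le> r \<and> r < i * m + m then X $$ (r - i * m, b) else 0)"
    by (rule sum_single')
  finally show "(Esel m N i * X) $$ (r, b) = mat (N * m) c (\<lambda>(r, b). if i * m \<le> r \<and> r < i * m + m then X $$ (r - i * m, b) else 0) $$ (r, b)"
    using rr bc by simp
qed (use X in auto)


lemma lt_block: "i < N \<Longrightarrow> a < m \<Longrightarrow> i * m + a < N * (m::nat)"
proof -
  assume i: "i < N" and a: "a < m"
  have "i * m + a < i * m + m" using a by simp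
  also have "\<dots> = Suc i * m" by simp
  also have "\<dots> \<le> N * m" using i by (intro mult_le_mono1) simp
  finally show ?thesis .
qed

lemma Esel_carrier: "Esel m N i \<in> carrier_mat (N * m) m"
  by (rule carrier_matI) auto

lemma lt_block2: "i < Suc N \<Longrightarrow> a < m \<Longrightarrow> i * m + a < N * m + (m::nat)"
  using lt_block[of i "Suc N" a m] by simp

lemma M_E: assumes M: "M \<in> carrier_mat r (N * m)" and j: "j < N"
  shows "M * Esel m N j = mat r m (\<lambda>(a, b). M $$ (a, j * m + b))"
proof -
  have "M * Esel m N j = transpose_mat (transpose_mat (Esel m N j) * transpose_mat M)"
    using M transpose_mult[of "transpose_mat (Esel m N j)" m "N * m" "transpose_mat M" r] Esel_carrier[of m N j] by simp
  also have "\<dots> = transpose_mat (mat m r (\<lambda>(a, b). transpose_mat M $$ (j * m + a, b)))"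
    using Et_mult[of "transpose_mat M" N m r j] M j by simp
  also have "\<dots> = mat r m (\<lambda>(a, b). M $$ (a, j * m + b))"
    using M j lt_block[OF j] by (intro eq_matI) auto
  finally show ?thesis .
qed

lemma blk_entry: assumes M: "M \<in> carrier_mat (N * m) (N * m)" and i: "i < N" and j: "j < N"
  shows "transpose_mat (Esel m N i) * (M * Esel m N j) = mat m m (\<lambda>(a, b). M $$ (i * m + a, j * m + b))"
proof -
  have "M * Esel m N j \<in> carrier_mat (N * m) m" by (rule mult_carrier_mat[OF M Esel_carrier])
  hence "transpose_mat (Esel m N i) * (M * Esel m N j) = mat m m (\<lambda>(a, b). (M * Esel m N j) $$ (i * m + a, b))"
    using Et_mult i by blast
  also have "\<dots> = mat m m (\<lambda>(a, b). M $$ (i * m + a, j * m + b))"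
    unfolding M_E[OF M j] using lt_block[OF i] by (intro eq_matI) auto
  finally show ?thesis .
qed

lemma Esel_1: "Esel m 1 0 = 1\<^sub>m m"
  unfolding Esel_def by (intro eq_matI) auto

lemma block11_blk: assumes M: "M \<in> carrier_mat (N * m) (N * m)" and N: "1 \<le> N"
  shows "block11 m M = transpose_mat (Esel m N 0) * (M * Esel m N 0)"
  using blk_entry[OF M, of 0 0] N unfolding block11_def by simp

lemma fb_blk:
  assumes A: "A \<in> carrier_mat (N * m) (N * m)" and B: "B \<in> carrier_mat (N * m) m"
    and C: "C \<in> carrier_mat m (N * m)" and D: "D \<in> carrier_mat m m"
  shows "i < N \<Longrightarrow> j < N \<Longrightarrow> transpose_mat (Esel m (Suc N) i) * (four_block_mat A B C D * Esel m (Suc N) j)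
           = transpose_mat (Esel m N i) * (A * Esel m N j)"
    "i < N \<Longrightarrow> transpose_mat (Esel m (Suc N) i) * (four_block_mat A B C D * Esel m (Suc N) N)
           = transpose_mat (Esel m N i) * B"
    "j < N \<Longrightarrow> transpose_mat (Esel m (Suc N) N) * (four_block_mat A B C D * Esel m (Suc N) j)
           = C * Esel m N j"
    "transpose_mat (Esel m (Suc N) N) * (four_block_mat A B C D * Esel m (Suc N) N) = D"
proof -
  have F: "four_block_mat A B C D \<in> carrier_mat (Suc N * m) (Suc N * m)"
    using A D by (intro carrier_matI) auto
  note e = blk_entry[OF F]
  have dA: "dim_row A = N * m" "dim_col A = N * m" using A by auto
  show "i < N \<Longrightarrow> j < N \<Longrightarrow> transpose_mat (Esel m (Suc N) i) * (four_block_mat A B C D * Esel m (Suc N) j)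
           = transpose_mat (Esel m N i) * (A * Esel m N j)"
    unfolding blk_entry[OF A] using e dA D by (intro eq_matI) (auto simp: lt_block lt_block2)
  show "i < N \<Longrightarrow> transpose_mat (Esel m (Suc N) i) * (four_block_mat A B C D * Esel m (Suc N) N)
           = transpose_mat (Esel m N i) * B"
    unfolding Et_mult[OF B] using e dA B D by (intro eq_matI) (auto simp: lt_block lt_block2)
  show "j < N \<Longrightarrow> transpose_mat (Esel m (Suc N) N) * (four_block_mat A B C D * Esel m (Suc N) j)
           = C * Esel m N j"
    unfolding M_E[OF C] using e dA C D by (intro eq_matI) (auto simp: lt_block lt_block2)
  show "transpose_mat (Esel m (Suc N) N) * (four_block_mat A B C D * Esel m (Suc N) N) = D"
    using e dA D by (intro eq_matI) (auto simp: lt_block lt_block2)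
qed


lemma dmq: assumes "q * m \<le> r" "r < q * m + (m::nat)" shows "r div m = q" "r mod m = r - q * m"
proof -
  show d: "r div m = q" using assms by (intro div_nat_eqI) (auto simp: algebra_simps)
  show "r mod m = r - q * m" using d by (metis minus_div_mult_eq_mod)
qed

lemma qblock: assumes "0 < (m::nat)" shows "(r div m) * m \<le> r" "r < (r div m) * m + m"
proof -
  show "(r div m) * m \<le> r" by simp
  have "r = (r div m) * m + r mod m" by simp
  moreover have "r mod m < m" using assms by simp
  ultimately show "r < (r div m) * m + m" by linarith
qed

lemma T_split: assumes N: "1 \<le> N" and Gc: "G N \<in> carrier_mat m m" and Oc: "Om (Suc N) \<in> carrier_mat m m"
  shows "lanczos_T m Om G (Suc N) = four_block_mat (lanczos_T m Om G N) (Esel m N (N - 1) * transpose_mat (G N))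
     (transpose_mat (Esel m N (N - 1) * transpose_mat (G N))) (Om (Suc N))"
    (is "?L = four_block_mat ?T ?B (transpose_mat ?B) ?O")
proof -
  have Bm: "?B = mat (N * m) m (\<lambda>(r, b). if (N - 1) * m \<le> r \<and> r < (N - 1) * m + m then G N $$ (b, r - (N - 1) * m) else 0)"
  proof -
    have Gt: "transpose_mat (G N) \<in> carrier_mat m m" using Gc by simp
    show ?thesis unfolding E_mult[OF Gt] using Gc by (intro eq_matI) auto
  qed
  have dT: "dim_row ?T = N * m" "dim_col ?T = N * m" unfolding lanczos_T_def by auto
  have dO: "dim_row ?O = m" "dim_col ?O = m" using Oc by auto
  have Nm: "(N - 1) * m + m = N * m" using N by (cases N) auto
  show ?thesis
  proof (rule eq_matI)
    fix r c assume r: "r < dim_row (four_block_mat ?T ?B (transpose_mat ?B) ?O)"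
      and c: "c < dim_col (four_block_mat ?T ?B (transpose_mat ?B) ?O)"
    hence rr: "r < N * m + m" and cc: "c < N * m + m" using dT dO by auto
    hence m0: "0 < m" by (cases m) auto
    have Le: "?L $$ (r, c) = (let i = r div m + 1; j = c div m + 1; a = r mod m; b = c mod m in
      if i = j then Om i $$ (a, b)
      else if i = j + 1 then G j $$ (a, b)
      else if j = i + 1 then G i $$ (b, a)
      else 0)" using rr cc unfolding lanczos_T_def by (simp add: algebra_simps)
    have Re: "four_block_mat ?T ?B (transpose_mat ?B) ?O $$ (r, c) = (if r < N * m then
      if c < N * m then ?T $$ (r, c) else ?B $$ (r, c - N * m)
      else if c < N * m then transpose_mat ?B $$ (r - N * m, c) else ?O $$ (r - N * m, c - N * m))"
      using rr cc dT dO by simp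
    note qr = qblock[OF m0, of r] and qc = qblock[OF m0, of c]
    show "?L $$ (r, c) = four_block_mat ?T ?B (transpose_mat ?B) ?O $$ (r, c)"
    proof (cases "r < N * m")
      case rT: True
      have rq: "r div m < N" using rT by (simp add: less_mult_imp_div_less)
      show ?thesis
      proof (cases "c < N * m")
        case True
        thus ?thesis unfolding Le Re using rT unfolding lanczos_T_def by (simp add: Let_def)
      next
        case False
        have cd: "c div m = N" "c mod m = c - N * m" using dmq[of N m c] False cc by auto
        show ?thesis
        proof (cases "r div m = N - 1")
          case True
          have rm: "r mod m = r - (N - 1) * m" using dmq[of "N - 1" m r] qr True by simp
          have "(N - 1) * m \<le> r \<and> r < (N - 1) * m + m" using qr True by simp
          thus ?thesis unfolding Le Re using rT False cd True rm N cc Bm by (simp add: Let_def)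
        next
          case nq: False
          have "\<not> ((N - 1) * m \<le> r \<and> r < (N - 1) * m + m)" using dmq[of "N - 1" m r] nq by auto
          thus ?thesis unfolding Le Re using rT False cd nq rq N cc Bm by (auto simp: Let_def)
        qed
      qed
    next
      case rF: False
      have rd: "r div m = N" "r mod m = r - N * m" using dmq[of N m r] rF rr by auto
      show ?thesis
      proof (cases "c < N * m")
        case True
        have cq: "c div m < N" using True by (simp add: less_mult_imp_div_less)
        show ?thesis
        proof (cases "c div m = N - 1")
          case cT: True
          have cm: "c mod m = c - (N - 1) * m" using dmq[of "N - 1" m c] qc cT by simp
          have "(N - 1) * m \<le> c \<and> c < (N - 1) * m + m" using qc cT by simp
          thus ?thesis unfolding Le Re using rF True rd cT cm N rr Bm by (simp add: Let_def)
        next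
          case nq: False
          have "\<not> ((N - 1) * m \<le> c \<and> c < (N - 1) * m + m)" using dmq[of "N - 1" m c] nq by auto
          thus ?thesis unfolding Le Re using rF True rd nq cq N rr Bm by (auto simp: Let_def)
        qed
      next
        case False
        have cd: "c div m = N" "c mod m = c - N * m" using dmq[of N m c] False cc by auto
        show ?thesis unfolding Le Re using rF False rd cd by (simp add: Let_def)
      qed
    qed
  qed (use dT dO in \<open>auto simp: lanczos_T_def\<close>)
qed

lemma T_1: "Om 1 \<in> carrier_mat m m \<Longrightarrow> lanczos_T m Om G 1 = Om 1"
  unfolding lanczos_T_def by (intro eq_matI) auto



section \<open>Block inverse recursion\<close>

fun lanczos_Psi :: "nat \<Rightarrow> (nat \<Rightarrow> real mat) \<Rightarrow> (nat \<Rightarrow> real mat) \<Rightarrow> nat \<Rightarrow> real mat" where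
  "lanczos_Psi m Om G 0 = 1\<^sub>m m"
| "lanczos_Psi m Om G (Suc j) = lanczos_Pi Om G (Suc j) * lanczos_Psi m Om G j"

locale BT =
  fixes m KK :: nat and Om G :: "nat \<Rightarrow> real mat"
  assumes Omc: "\<And>i. 1 \<le> i \<Longrightarrow> i \<le> KK \<Longrightarrow> Om i \<in> carrier_mat m m"
    and Gc: "\<And>i. 1 \<le> i \<Longrightarrow> i < KK \<Longrightarrow> G i \<in> carrier_mat m m"
    and DI: "\<And>i. 1 \<le> i \<Longrightarrow> i \<le> KK \<Longrightarrow> invm (lanczos_Delta Om G i) m \<and> transpose_mat (lanczos_Delta Om G i) = lanczos_Delta Om G i"
begin

abbreviation "Dl j \<equiv> lanczos_Delta Om G j"
abbreviation "Ps j \<equiv> lanczos_Psi m Om G j"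
abbreviation "TT N \<equiv> lanczos_T m Om G N"
abbreviation "blk N i j M \<equiv> transpose_mat (Esel m N i) * (M * Esel m N j)"

lemma DD: assumes "1 \<le> i" "i \<le> KK"
  shows "dim_row (Dl i) = m" "dim_col (Dl i) = m"
    "dim_row (minv (Dl i)) = m" "dim_col (minv (Dl i)) = m"
    "Dl i * minv (Dl i) = 1\<^sub>m m" "minv (Dl i) * Dl i = 1\<^sub>m m"
    "transpose_mat (Dl i) = Dl i" "transpose_mat (minv (Dl i)) = minv (Dl i)" "invm (Dl i) m"
  using DI[OF assms] invm_carrier[of "Dl i" m] invm_sym[of "Dl i" m] by auto

lemma dG: "1 \<le> i \<Longrightarrow> i < KK \<Longrightarrow> dim_row (G i) = m" "1 \<le> i \<Longrightarrow> i < KK \<Longrightarrow> dim_col (G i) = m"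
  using Gc by auto

lemma dPs: "j < KK \<Longrightarrow> dim_row (Ps j) = m \<and> dim_col (Ps j) = m"
proof (induction j)
  case 0 thus ?case by simp
next
  case (Suc j) thus ?case using dG[of "Suc j"] by (simp add: lanczos_Pi_def)
qed

definition TI :: "nat \<Rightarrow> bool" where
  "TI N \<longleftrightarrow> invm (TT N) (N * m) \<and> blk N (N - 1) (N - 1) (minv (TT N)) = minv (Dl N) \<and>
     (\<exists>\<sigma>::real. \<sigma> * \<sigma> = 1 \<and> blk N 0 (N - 1) (minv (TT N)) = \<sigma> \<cdot>\<^sub>m (transpose_mat (Ps (N - 1)) * minv (Dl N))
        \<and> blk N (N - 1) 0 (minv (TT N)) = \<sigma> \<cdot>\<^sub>m (minv (Dl N) * Ps (N - 1)))"

lemma TI_1: assumes "1 \<le> KK" shows "TI 1"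
proof -
  have "Om 1 \<in> carrier_mat m m" using Omc[of 1] assms by simp
  hence T1: "TT 1 = Dl 1" using T_1[of Om m G] by simp
  note d = DD[of 1] assms
  have e: "blk 1 0 0 (minv (Dl 1)) = minv (Dl 1)" unfolding Esel_1 using d by simp
  show ?thesis unfolding TI_def T1 using e d
    by (intro conjI exI[of _ "1::real"]) (auto simp: msmult_one)
qed


lemma TI_Suc: assumes TI: "TI (Suc j)" and N: "Suc (Suc j) \<le> KK"
  shows "TI (Suc (Suc j))"
    "blk (Suc (Suc j)) 0 0 (minv (TT (Suc (Suc j)))) = blk (Suc j) 0 0 (minv (TT (Suc j)))
       + transpose_mat (Ps (Suc j)) * (minv (Dl (Suc (Suc j))) * Ps (Suc j))"
proof -
  define S where "S = minv (TT (Suc j))"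
  from TI obtain \<sigma> :: real where iT: "invm (TT (Suc j)) (Suc j * m)"
    and b11: "blk (Suc j) j j S = minv (Dl (Suc j))" and s: "\<sigma> * \<sigma> = 1"
    and b0: "blk (Suc j) 0 j S = \<sigma> \<cdot>\<^sub>m (transpose_mat (Ps j) * minv (Dl (Suc j)))"
    and b1: "blk (Suc j) j 0 S = \<sigma> \<cdot>\<^sub>m (minv (Dl (Suc j)) * Ps j)"
    unfolding TI_def S_def by auto
  note tc = invm_carrier[OF iT, folded S_def]
  have GN: "G (Suc j) \<in> carrier_mat m m" using Gc[of "Suc j"] N by simp
  have dGN: "dim_row (G (Suc j)) = m" "dim_col (G (Suc j)) = m" using GN by auto
  have Oc: "Om (Suc (Suc j)) \<in> carrier_mat m m" using Omc[of "Suc (Suc j)"] N by simp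
  have dO: "dim_row (Om (Suc (Suc j))) = m" "dim_col (Om (Suc (Suc j))) = m" using Oc by auto
  note d1 = DD[of "Suc j"] N
  note d2 = DD[of "Suc (Suc j)"] N
  have dps: "dim_row (Ps j) = m" "dim_col (Ps j) = m" using dPs[of j] N by auto
  define E where "E = Esel m (Suc j) j"
  define E0 where "E0 = Esel m (Suc j) 0"
  have dE: "dim_row E = Suc j * m" "dim_col E = m" "dim_row E0 = Suc j * m" "dim_col E0 = m"
    unfolding E_def E0_def by auto
  define C where "C = E * transpose_mat (G (Suc j))"
  have Cc: "C \<in> carrier_mat (Suc j * m) m" unfolding C_def by (rule carrier_matI) (simp_all add: dE dGN)
  have dC: "dim_row C = Suc j * m" "dim_col C = m" using Cc by auto
  have Ct: "transpose_mat C = G (Suc j) * transpose_mat E" unfolding C_def using dE dGN by (simp add: mtrans_mult)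
  have b11': "transpose_mat E * (S * E) = minv (Dl (Suc j))" using b11 unfolding E_def by simp
  have b0': "transpose_mat E0 * (S * E) = \<sigma> \<cdot>\<^sub>m (transpose_mat (Ps j) * minv (Dl (Suc j)))" using b0 unfolding E_def E0_def by simp
  have b1': "transpose_mat E * (S * E0) = \<sigma> \<cdot>\<^sub>m (minv (Dl (Suc j)) * Ps j)" using b1 unfolding E_def E0_def by simp
  have CSC: "transpose_mat C * (S * C) = G (Suc j) * (minv (Dl (Suc j)) * transpose_mat (G (Suc j)))"
    unfolding Ct unfolding C_def using dE dGN tc d1
    by (simp add: malg rassoc2[OF b11'])
  have Dq: "Om (Suc (Suc j)) - transpose_mat C * (minv (TT (Suc j)) * C) = Dl (Suc (Suc j))"
    unfolding S_def[symmetric] CSC using d1 dGN by (simp add: massoc)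
  have iD: "invm (Om (Suc (Suc j)) - transpose_mat C * (minv (TT (Suc j)) * C)) m" unfolding Dq using d2 by simp
  note sch = schur_inv[OF iT Cc Oc iD, unfolded Dq, folded S_def]
  have Tsplit: "TT (Suc (Suc j)) = four_block_mat (TT (Suc j)) C (transpose_mat C) (Om (Suc (Suc j)))"
    unfolding C_def E_def using T_split[of "Suc j" G m Om] GN Oc by simp
  have nm: "Suc j * m + m = Suc (Suc j) * m" by simp
  define Di where "Di = minv (Dl (Suc (Suc j)))"
  have dDi: "dim_row Di = m" "dim_col Di = m" unfolding Di_def using d2 by auto
  define A' where "A' = S + S * (C * (Di * (transpose_mat C * S)))"
  define B' where "B' = (-1) \<cdot>\<^sub>m (S * (C * Di))"
  define C' where "C' = (-1) \<cdot>\<^sub>m (Di * (transpose_mat C * S))"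
  have A'c: "A' \<in> carrier_mat (Suc j * m) (Suc j * m)" unfolding A'_def
    by (rule carrier_matI) (simp_all add: tc dC dDi)
  have B'c: "B' \<in> carrier_mat (Suc j * m) m" unfolding B'_def
    by (rule carrier_matI) (simp_all add: tc dC dDi)
  have C'c: "C' \<in> carrier_mat m (Suc j * m)" unfolding C'_def
    by (rule carrier_matI) (simp_all add: tc dC dDi)
  have Dic: "Di \<in> carrier_mat m m" by (rule carrier_matI) (simp_all add: dDi)
  have mT: "minv (TT (Suc (Suc j))) = four_block_mat A' B' C' Di"
    unfolding Tsplit sch(2) A'_def B'_def C'_def Di_def ..
  note fb = fb_blk[OF A'c B'c C'c Dic, unfolded mT[symmetric]]
  have iT2: "invm (TT (Suc (Suc j))) (Suc (Suc j) * m)" using sch(1) unfolding Tsplit nm .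
  have psS: "Ps (Suc j) = G (Suc j) * (minv (Dl (Suc j)) * Ps j)"
    using d1 dGN dps by (simp add: lanczos_Pi_def massoc)
  have psSt: "transpose_mat (Ps (Suc j)) = transpose_mat (Ps j) * (minv (Dl (Suc j)) * transpose_mat (G (Suc j)))"
    unfolding psS using d1 dGN dps by (simp add: malg)
  have nb11: "blk (Suc (Suc j)) (Suc j) (Suc j) (minv (TT (Suc (Suc j)))) = Di" using fb(4) .
  have nb0: "blk (Suc (Suc j)) 0 (Suc j) (minv (TT (Suc (Suc j)))) = (- \<sigma>) \<cdot>\<^sub>m (transpose_mat (Ps (Suc j)) * Di)"
  proof -
    have "blk (Suc (Suc j)) 0 (Suc j) (minv (TT (Suc (Suc j)))) = transpose_mat E0 * B'"
      using fb(2)[of 0] unfolding E0_def by simp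
    also have "\<dots> = (- \<sigma>) \<cdot>\<^sub>m (transpose_mat (Ps (Suc j)) * Di)"
      unfolding B'_def C_def psSt using tc dE dGN d1 dDi dps
      by (simp add: malg rassoc2[OF b0'] msmult_smult)
    finally show ?thesis .
  qed
  have nb1: "blk (Suc (Suc j)) (Suc j) 0 (minv (TT (Suc (Suc j)))) = (- \<sigma>) \<cdot>\<^sub>m (Di * Ps (Suc j))"
  proof -
    have "blk (Suc (Suc j)) (Suc j) 0 (minv (TT (Suc (Suc j)))) = C' * E0"
      using fb(3)[of 0] unfolding E0_def by simp
    also have "\<dots> = (- \<sigma>) \<cdot>\<^sub>m (Di * Ps (Suc j))"
      unfolding C'_def Ct psS using tc dE dGN d1 dDi dps
      by (simp add: malg b1' msmult_smult)
    finally show ?thesis .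
  qed
  have nb00: "blk (Suc (Suc j)) 0 0 (minv (TT (Suc (Suc j)))) = blk (Suc j) 0 0 (minv (TT (Suc j)))
       + transpose_mat (Ps (Suc j)) * (Di * Ps (Suc j))"
  proof -
    have "blk (Suc (Suc j)) 0 0 (minv (TT (Suc (Suc j)))) = transpose_mat E0 * (A' * E0)"
      using fb(1)[of 0 0] unfolding E0_def by simp
    also have "\<dots> = transpose_mat E0 * (S * E0) + transpose_mat (Ps (Suc j)) * (Di * Ps (Suc j))"
      unfolding A'_def Ct unfolding C_def psSt psS using tc dE dGN d1 dDi dps
      by (simp add: malg b1' rassoc2[OF b0'] msmult_smult s msmult_one)
    finally show ?thesis unfolding E0_def S_def .
  qed
  show "TI (Suc (Suc j))" unfolding TI_def using iT2 nb11 nb0 nb1 s unfolding Di_def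
    by (intro conjI exI[of _ "- \<sigma>"]) auto
  show "blk (Suc (Suc j)) 0 0 (minv (TT (Suc (Suc j)))) = blk (Suc j) 0 0 (minv (TT (Suc j)))
       + transpose_mat (Ps (Suc j)) * (minv (Dl (Suc (Suc j))) * Ps (Suc j))" using nb00 unfolding Di_def .
qed


lemma TI_all: "1 \<le> N \<Longrightarrow> N \<le> KK \<Longrightarrow> TI N"
proof (induction N)
  case 0 thus ?case by simp
next
  case (Suc N)
  show ?case
  proof (cases N)
    case 0 thus ?thesis using TI_1 Suc by simp
  next
    case (Suc j)
    thus ?thesis using TI_Suc(1)[of j] Suc.IH Suc.prems by simp
  qed
qed

lemma block_diff: assumes N: "1 \<le> N" "Suc N \<le> KK"
  shows "block11 m (minv (TT (Suc N))) - block11 m (minv (TT N)) = transpose_mat (Ps N) * (minv (Dl (Suc N)) * Ps N)"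
proof -
  obtain j where j: "N = Suc j" using N by (cases N) auto
  have t1: "TI N" using TI_all N by simp
  have t2: "TI (Suc N)" using TI_all N by simp
  have c1: "minv (TT N) \<in> carrier_mat (N * m) (N * m)" using t1 unfolding TI_def invm_def by auto
  have c2: "minv (TT (Suc N)) \<in> carrier_mat (Suc N * m) (Suc N * m)" using t2 unfolding TI_def invm_def by auto
  have e: "blk (Suc N) 0 0 (minv (TT (Suc N))) = blk N 0 0 (minv (TT N))
       + transpose_mat (Ps N) * (minv (Dl (Suc N)) * Ps N)" using TI_Suc(2)[of j] t1 N j by simp
  have s1: "block11 m (minv (TT N)) = blk N 0 0 (minv (TT N))" using block11_blk[OF c1 N(1)] .
  have s2: "block11 m (minv (TT (Suc N))) = blk (Suc N) 0 0 (minv (TT (Suc N)))" using block11_blk[OF c2] by simp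
  have dp: "dim_row (Ps N) = m" "dim_col (Ps N) = m" using dPs[of N] N by auto
  have db: "dim_row (blk N 0 0 (minv (TT N))) = m" "dim_col (blk N 0 0 (minv (TT N))) = m" by auto
  show ?thesis unfolding s1 s2 e using dp db
    by (intro eq_matI) auto
qed

end


context LZC begin

lemma MI_all: "j \<le> k \<Longrightarrow> MI j"
proof (induction j)
  case 0 thus ?case using MI_0 by simp
next
  case (Suc j) thus ?case using MI_Suc by simp
qed

lemma Theta_form: assumes M: "MI j" and jk: "j \<le> k"
  shows "transpose_mat (R j) * R j * bcg_Upsilon A B X0 j = transpose_mat (Ph j) * (minv (Dl (Suc j)) * Ph j)"
proof -
  from M obtain \<sigma> :: real where o: "orth (Suc j)" and iD: "invD (Suc j)" and iP: "invm (Ph j) m"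
    and s: "\<sigma> * \<sigma> = 1" and Rj: "R j = \<sigma> \<cdot>\<^sub>m (V (Suc j) * Ph j)" and Pj: "P j = \<sigma> \<cdot>\<^sub>m (U j * Ph j)"
    unfolding MI_def by blast
  have jK: "Suc j \<le> Suc k" using jk by simp
  have I: "invD j" using invD_mono[OF iD] by simp
  note d = invDD[OF iD, of "Suc j"]
  note pc = invm_carrier[OF iP]
  have du: "dim_row (U j) = n" "dim_col (U j) = m" using Uc[OF I] jK by auto
  have uau: "transpose_mat (U j) * (A * U j) = Dl (Suc j)" using UAU[OF I o] jK by simp
  have vv: "transpose_mat (V (Suc j)) * V (Suc j) = 1\<^sub>m m" using VV[of "Suc j"] jK by simp
  have PAP: "transpose_mat (P j) * A * P j = transpose_mat (Ph j) * (Dl (Suc j) * Ph j)"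
    unfolding Pj using du pc d jK
    by (simp add: malg rassoc2[OF uau] msmult_smult s msmult_one)
  have RR: "transpose_mat (R j) * R j = transpose_mat (Ph j) * Ph j"
    unfolding Rj using pc jK
    by (simp add: malg rassoc[OF vv] msmult_smult s msmult_one)
  have t1: "transpose_mat (minv (Ph j)) * transpose_mat (Ph j) = 1\<^sub>m m"
    using pc by (simp add: mtrans_mult[symmetric])
  have mi: "minv (transpose_mat (Ph j) * (Dl (Suc j) * Ph j)) = minv (Ph j) * minv (Dl (Suc j)) * transpose_mat (minv (Ph j))"
    using invm_mult[OF d(11) iP] invm_mult(2)[OF invm_trans(1)[OF iP] invm_mult(1)[OF d(11) iP]] invm_trans(2)[OF iP]
    by simp
  have Ups: "bcg_Upsilon A B X0 j = minv (Ph j) * (minv (Dl (Suc j)) * Ph j)"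
    unfolding bcg_Upsilon_def PAP RR mi using pc d
    by (simp add: malg rassoc[OF t1])
  show ?thesis unfolding Ups RR using pc d by (simp add: malg rassoc[OF pc(7)])
qed

lemma Psi_dims: "invD j \<Longrightarrow> j \<le> k \<Longrightarrow> dim_row (lanczos_Psi m Om G j) = m \<and> dim_col (lanczos_Psi m Om G j) = m"
proof (induction j)
  case 0 thus ?case by simp
next
  case (Suc i)
  have "invD i" using invD_mono[OF Suc.prems(1)] by simp
  thus ?case using Suc invDD[OF Suc.prems(1), of "Suc i"] Gc[of "Suc i"] by (simp add: lanczos_Pi_def)
qed

lemma Ph_Ps: "invD j \<Longrightarrow> j \<le> k \<Longrightarrow> Ph j = lanczos_Psi m Om G j * G 0"
proof (induction j)
  case 0 thus ?case using Gc[of 0] by simp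
next
  case (Suc j)
  have I: "invD j" using invD_mono[OF Suc.prems(1)] by simp
  note d = invDD[OF Suc.prems(1), of "Suc j"]
  have ih: "Ph j = lanczos_Psi m Om G j * G 0" using Suc I by simp
  have dP: "dim_row (lanczos_Psi m Om G j) = m \<and> dim_col (lanczos_Psi m Om G j) = m"
    using Psi_dims I Suc.prems by simp
  show ?case using ih d dP Suc.prems by (simp add: lanczos_Pi_def massoc)
qed

end


theorem mainTheorem11:
  fixes n m k :: nat
    and A B X0 :: "real mat"
    and V G Om :: "nat \<Rightarrow> real mat"
  assumes A: "spd n A"
    and B: "B \<in> carrier_mat n m"
    and X0: "X0 \<in> carrier_mat n m"
    and k: "k \<ge> 1"
    and krylov: "\<forall>j. 1 \<le> j \<and> j \<le> k + 1 \<longrightarrow>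
                   vec_space.rank n (krylov_mat m A (bcg_R A B X0 0) j) = j * m"
    and lanczos: "block_lanczos n m A (bcg_R A B X0 0) V G Om (k + 1)"
    and fullrank: "\<forall>j \<le> k. full_col_rank (bcg_R A B X0 j)"
  shows "block11 m (minv (lanczos_T m Om G (k + 1))) - block11 m (minv (lanczos_T m Om G k))
           = minv (transpose_mat (lanczos_Phi Om G 0)) * transpose_mat (lanczos_Phi Om G k)
               * minv (lanczos_Delta Om G (k + 1)) * lanczos_Phi Om G k * minv (lanczos_Phi Om G 0)
       \<and> transpose_mat (lanczos_Phi Om G 0)
           * (block11 m (minv (lanczos_T m Om G (k + 1))) - block11 m (minv (lanczos_T m Om G k)))
           * lanczos_Phi Om G 0
           = (transpose_mat (bcg_R A B X0 k) * bcg_R A B X0 k) * bcg_Upsilon A B X0 k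
       \<and> (transpose_mat (bcg_R A B X0 k) * bcg_R A B X0 k) * bcg_Upsilon A B X0 k
           = bcg_Theta A B X0 k"
proof -
  have lz: "block_lanczos n m A (bcg_R A B X0 0) V G Om (Suc k)" using lanczos by simp
  interpret L: LZC n m k A B X0 V G Om
    by (rule LZC.intro[OF LZ.intro[OF A lz] LZC_axioms.intro[OF B X0 fullrank]])
  have M0: "L.MI 0" using L.MI_all by simp
  have Mk: "L.MI k" using L.MI_all by simp
  have iD: "L.invD (Suc k)" using Mk unfolding L.MI_def by simp
  have iDk: "L.invD k" using L.invD_mono[OF iD] by simp
  have iG: "invm (G 0) m" using M0 unfolding L.MI_def by simp
  interpret T: BT m "Suc k" Om G
  proof
    show "\<And>i. 1 \<le> i \<Longrightarrow> i \<le> Suc k \<Longrightarrow> Om i \<in> carrier_mat m m" using L.Omc by simp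
    show "\<And>i. 1 \<le> i \<Longrightarrow> i < Suc k \<Longrightarrow> G i \<in> carrier_mat m m" using L.Gc by simp
    show "\<And>i. 1 \<le> i \<Longrightarrow> i \<le> Suc k \<Longrightarrow> invm (lanczos_Delta Om G i) m \<and> transpose_mat (lanczos_Delta Om G i) = lanczos_Delta Om G i"
      using iD unfolding L.invD_def by simp
  qed
  have diff: "block11 m (minv (lanczos_T m Om G (Suc k))) - block11 m (minv (lanczos_T m Om G k))
     = transpose_mat (lanczos_Psi m Om G k) * (minv (lanczos_Delta Om G (Suc k)) * lanczos_Psi m Om G k)"
    using T.block_diff[of k] k by simp
  have PhPs: "lanczos_Phi Om G k = lanczos_Psi m Om G k * G 0" using L.Ph_Ps[OF iDk] by simp
  have dPs: "dim_row (lanczos_Psi m Om G k) = m" "dim_col (lanczos_Psi m Om G k) = m"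
    using L.Psi_dims[OF iDk] by auto
  note gc = invm_carrier[OF iG]
  note dd = L.invDD[OF iD, of "Suc k"]
  have t: "transpose_mat (minv (G 0)) * transpose_mat (G 0) = 1\<^sub>m m"
    using gc by (simp add: mtrans_mult[symmetric])
  have c1: "minv (transpose_mat (lanczos_Phi Om G 0)) * transpose_mat (lanczos_Phi Om G k)
               * minv (lanczos_Delta Om G (k + 1)) * lanczos_Phi Om G k * minv (lanczos_Phi Om G 0)
     = transpose_mat (lanczos_Psi m Om G k) * (minv (lanczos_Delta Om G (Suc k)) * lanczos_Psi m Om G k)"
    unfolding PhPs using invm_trans(2)[OF iG] gc dPs dd
    by (simp del: lanczos_Psi.simps lanczos_Phi.simps add: lanczos_Phi.simps(1) malg rassoc[OF t])
  have c2: "transpose_mat (lanczos_Phi Om G 0)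
           * (transpose_mat (lanczos_Psi m Om G k) * (minv (lanczos_Delta Om G (Suc k)) * lanczos_Psi m Om G k))
           * lanczos_Phi Om G 0 = transpose_mat (lanczos_Phi Om G k) * (minv (lanczos_Delta Om G (Suc k)) * lanczos_Phi Om G k)"
    unfolding PhPs using gc dPs dd
    by (simp del: lanczos_Psi.simps lanczos_Phi.simps add: lanczos_Phi.simps(1) malg)
  have th: "transpose_mat (bcg_R A B X0 k) * bcg_R A B X0 k * bcg_Upsilon A B X0 k
     = transpose_mat (lanczos_Phi Om G k) * (minv (lanczos_Delta Om G (Suc k)) * lanczos_Phi Om G k)"
    using L.Theta_form[OF Mk] by simp
  show ?thesis
    unfolding Suc_eq_plus1[symmetric] diff
    using c1 c2 th unfolding bcg_Theta_def by simp
qed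

end
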